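(* Consider the unit sphere $\mathbb{S}^2$ in the coordinates $(\varphi,\theta)=(\arcsin z,\operatorname{atan2}(y,x))\in\,]-\tfrac{\pi}{2},\tfrac{\pi}{2}[\,\times\,]-\pi,\pi]$, equipped with the distance $$\tilde d((\theta_1,\varphi_1),(\theta_2,\varphi_2))=\sqrt{\big((\varphi_1-\varphi_2)\bmod\pi\big)^2+\big((\theta_1-\theta_2)\bmod 2\pi\big)^2}$$ and with the uniform probability measure, which in these coordinates is $\nu=\cos\varphi\,\frac{d\varphi\,d\theta}{4\pi}$. Then the MaxEnt posterior of $(\nu,\{\varphi=0\})$ is $\frac{1}{2\pi}\,d\theta\times\delta_0(\varphi)$, while the MaxEnt posterior of $(\nu,\{\theta=0\}\cup\{\theta=\pi\})$ is $\frac{\cos\varphi}{4}\,d\varphi\times(\delta_0(\theta)+\delta_\pi(\theta))$.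
   Context: MaxEnt posterior: on a metric space $(W,\rho)$ with Borel $\sigma$-algebra forming a standard Borel space, with prior Radon probability measure $\nu$, closed set $A\subset\mathrm{Supp}(\nu)$ and a fixed $R>0$, consider for each $\sigma>0$ the problem $\inf_\mu\{\mathrm{Ent}_\nu(\mu): \mu(W)=1,\ \int_W \rho_R(w,A)^2\,d\mu(w)\le\sigma^2\}$, where $\rho_R=\min(\rho,R)$, $\rho(w,A)=\inf_{a\in A}\rho(w,a)$, and $\mathrm{Ent}_\nu(\mu)=\int \frac{d\mu}{d\nu}\ln\frac{d\mu}{d\nu}\,d\nu$ if $\mu\ll\nu$, $+\infty$ otherwise. If for every $\sigma>0$ the infimum is attained by a unique $\mu_\sigma$ and $\mu_\sigma$ converges weakly as $\sigma\to0$, the limit is the MaxEnt posterior of $(\nu,A)$. Here $\operatorname{atan2}(y,x)=2\arctan\frac{y}{\sqrt{x^2+y^2}+x}$; $d\varphi,d\theta$ are Lebesgue measures and $\delta$ denotes Dirac masses. *)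

theory Defs
  imports "HOL-Probability.Probability"
begin

definition dist_to_set :: "('a \<Rightarrow> 'a \<Rightarrow> real) \<Rightarrow> 'a set \<Rightarrow> 'a \<Rightarrow> real" where
  "dist_to_set \<rho> A w = (INF a\<in>A. \<rho> w a)"

definition trunc_dist :: "('a \<Rightarrow> 'a \<Rightarrow> real) \<Rightarrow> real \<Rightarrow> 'a set \<Rightarrow> 'a \<Rightarrow> real" where
  "trunc_dist \<rho> R A w = min (dist_to_set \<rho> A w) R"

text \<open>Since f ln f >= -exp(-1) and nu is a probability measure,
  the (possibly infinite) integral is written as a nonnegative integral minus exp(-1).\<close>
definition Ent :: "'a measure \<Rightarrow> 'a measure \<Rightarrow> ereal" where
  "Ent \<nu> \<mu> =
     (if absolutely_continuous \<nu> \<mu> then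
        enn2ereal (\<integral>\<^sup>+ w. ennreal
            (enn2real (RN_deriv \<nu> \<mu> w) * ln (enn2real (RN_deriv \<nu> \<mu> w)) + exp (-1)) \<partial>\<nu>)
        - ereal (exp (-1))
      else \<infinity>)"

definition maxent_feasible ::
  "'a measure \<Rightarrow> ('a \<Rightarrow> 'a \<Rightarrow> real) \<Rightarrow> real \<Rightarrow> 'a set \<Rightarrow> real \<Rightarrow> 'a measure \<Rightarrow> bool" where
  "maxent_feasible \<nu> \<rho> R A \<sigma> \<mu> \<longleftrightarrow>
     sets \<mu> = sets \<nu> \<and> prob_space \<mu> \<and>
     (\<integral>\<^sup>+ w. ennreal ((trunc_dist \<rho> R A w)\<^sup>2) \<partial>\<mu>) \<le> ennreal (\<sigma>\<^sup>2)"

definition maxent_minimizer ::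
  "'a measure \<Rightarrow> ('a \<Rightarrow> 'a \<Rightarrow> real) \<Rightarrow> real \<Rightarrow> 'a set \<Rightarrow> real \<Rightarrow> 'a measure \<Rightarrow> bool" where
  "maxent_minimizer \<nu> \<rho> R A \<sigma> \<mu> \<longleftrightarrow>
     maxent_feasible \<nu> \<rho> R A \<sigma> \<mu> \<and>
     (\<forall>\<mu>'. maxent_feasible \<nu> \<rho> R A \<sigma> \<mu>' \<longrightarrow> Ent \<nu> \<mu> \<le> Ent \<nu> \<mu>')"

definition metric_continuous :: "('a \<Rightarrow> 'a \<Rightarrow> real) \<Rightarrow> 'a set \<Rightarrow> ('a \<Rightarrow> real) \<Rightarrow> bool" where
  "metric_continuous \<rho> W f \<longleftrightarrow>
     (\<forall>x\<in>W. \<forall>e>0. \<exists>d>0. \<forall>y\<in>W. \<rho> x y < d \<longrightarrow> \<bar>f y - f x\<bar> < e)"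

definition weak_conv_metric ::
  "('a \<Rightarrow> 'a \<Rightarrow> real) \<Rightarrow> 'a set \<Rightarrow> ('b \<Rightarrow> 'a measure) \<Rightarrow> 'a measure \<Rightarrow> 'b filter \<Rightarrow> bool" where
  "weak_conv_metric \<rho> W \<mu>s P F \<longleftrightarrow>
     (\<forall>f. (\<exists>B. \<forall>x\<in>W. \<bar>f x\<bar> \<le> B) \<and> metric_continuous \<rho> W f \<longrightarrow>
        ((\<lambda>s. \<integral>x. f x \<partial>(\<mu>s s)) \<longlongrightarrow> (\<integral>x. f x \<partial>P)) F)"

definition maxent_posterior ::
  "'a measure \<Rightarrow> ('a \<Rightarrow> 'a \<Rightarrow> real) \<Rightarrow> real \<Rightarrow> 'a set \<Rightarrow> 'a measure \<Rightarrow> bool" where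
  "maxent_posterior \<nu> \<rho> R A P \<longleftrightarrow>
     (\<forall>\<sigma>>0. \<exists>!\<mu>. maxent_minimizer \<nu> \<rho> R A \<sigma> \<mu>) \<and>
     weak_conv_metric \<rho> (space \<nu>) (\<lambda>\<sigma>. THE \<mu>. maxent_minimizer \<nu> \<rho> R A \<sigma> \<mu>) P (at_right 0)"

text \<open>Points are pairs (phi, theta).\<close>
definition W_S2 :: "(real \<times> real) set" where
  "W_S2 = {-pi/2<..<pi/2} \<times> {-pi<..pi}"

text \<open>x mod p read as the distance from x to the nearest multiple of p.\<close>
definition per_mod :: "real \<Rightarrow> real \<Rightarrow> real" where
  "per_mod x p = \<bar>x - p * of_int (round (x / p))\<bar>"

definition dS2 :: "real \<times> real \<Rightarrow> real \<times> real \<Rightarrow> real" where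
  "dS2 a b = sqrt ((per_mod (fst a - fst b) pi)\<^sup>2 + (per_mod (snd a - snd b) (2 * pi))\<^sup>2)"

definition M_S2 :: "(real \<times> real) measure" where
  "M_S2 = restrict_space lborel W_S2"

definition nu_S2 :: "(real \<times> real) measure" where
  "nu_S2 = density M_S2 (\<lambda>x. ennreal (cos (fst x) / (4 * pi)))"

definition equator :: "(real \<times> real) set" where
  "equator = {x \<in> W_S2. fst x = 0}"

definition meridians :: "(real \<times> real) set" where
  "meridians = {x \<in> W_S2. snd x = 0 \<or> snd x = pi}"

definition post_equator :: "(real \<times> real) measure" where
  "post_equator = distr
     (count_space {0} \<Otimes>\<^sub>M density (restrict_space lborel {-pi<..pi}) (\<lambda>_. ennreal (1 / (2 * pi))))
     M_S2 (\<lambda>x. x)"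

definition post_meridians :: "(real \<times> real) measure" where
  "post_meridians = distr
     (density (restrict_space lborel {-pi/2<..<pi/2}) (\<lambda>\<phi>. ennreal (cos \<phi> / 4)) \<Otimes>\<^sub>M count_space {0, pi})
     M_S2 (\<lambda>x. x)"

end

theory Submission
  imports Defs
begin

lemma ln_eq_minus_one_imp:
  fixes x :: real assumes "0 < x" "ln x = x - 1" shows "x = 1"
proof -
  have s: "0 < sqrt x" using assms by simp
  have "ln (sqrt x) \<le> sqrt x - 1" using ln_le_minus_one[OF s] .
  moreover have "ln x = 2 * ln (sqrt x)"
    using assms by (simp add: ln_sqrt)
  ultimately have "x - 1 \<le> 2 * sqrt x - 2" using assms by simp
  moreover have "x = sqrt x * sqrt x" using assms by simp
  ultimately have "(sqrt x - 1)^2 \<le> 0" by (simp add: power2_eq_square algebra_simps)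
  then have "sqrt x = 1" by simp
  then show ?thesis using assms by (metis real_sqrt_eq_1_iff)
qed

lemma xlnx_ineq:
  fixes a b :: real assumes "0 \<le> a" "0 < b"
  shows "a * ln b + a - b \<le> a * ln a"
proof (cases "a = 0")
  case True then show ?thesis using assms by simp
next
  case False
  then have a: "0 < a" using assms by simp
  have "ln (b / a) \<le> b / a - 1" using ln_le_minus_one[of "b/a"] a assms by simp
  then have "a * ln (b / a) \<le> a * (b / a - 1)" using a by (intro mult_left_mono) auto
  then show ?thesis using a assms by (simp add: ln_div algebra_simps)
qed

lemma xlnx_eq:
  fixes a b :: real assumes "0 \<le> a" "0 < b" "a * ln a = a * ln b + a - b"
  shows "a = b"
proof (cases "a = 0")
  case True then show ?thesis using assms by simp
next
  case False
  then have a: "0 < a" using assms by simp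
  have "a * ln (b / a) = a * (b / a - 1)" using a assms by (simp add: ln_div algebra_simps)
  then have "ln (b / a) = b / a - 1" using a by simp
  then have "b / a = 1" using ln_eq_minus_one_imp[of "b/a"] a assms by simp
  then show ?thesis using a by simp
qed

lemma exp_neg_lipschitz:
  fixes a b :: real assumes "0 \<le> a" "0 \<le> b"
  shows "\<bar>exp (- a) - exp (- b)\<bar> \<le> \<bar>a - b\<bar>"
proof -
  have *: "exp (- x) - exp (- y) \<le> y - x" if "0 \<le> x" "x \<le> y" for x y :: real
  proof -
    have "exp (- x) - exp (- y) = exp (- x) * (1 - exp (- (y - x)))"
      by (simp add: algebra_simps flip: exp_add)
    also have "\<dots> \<le> 1 * (1 - exp (- (y - x)))"
      using that by (intro mult_right_mono) auto
    also have "\<dots> \<le> y - x" using exp_ge_add_one_self[of "x - y"] by (simp only: mult_1 minus_diff_eq)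
    finally show ?thesis .
  qed
  show ?thesis
  proof (cases "a \<le> b")
    case True then show ?thesis using *[of a b] assms by auto
  next
    case False then show ?thesis using *[of b a] assms by auto
  qed
qed

lemma Ent_density:
  assumes P: "prob_space \<nu>" and fm: "f \<in> borel_measurable \<nu>" and f0: "\<forall>x\<in>space \<nu>. 0 \<le> f x"
  shows "Ent \<nu> (density \<nu> (\<lambda>x. ennreal (f x))) =
    (if integrable \<nu> (\<lambda>x. f x * ln (f x)) then ereal (\<integral>x. f x * ln (f x) \<partial>\<nu>) else \<infinity>)"
proof -
  interpret prob_space \<nu> by fact
  let ?\<mu> = "density \<nu> (\<lambda>x. ennreal (f x))"
  have ac: "absolutely_continuous \<nu> ?\<mu>" using fm by (intro absolutely_continuousI_density) simp
  have "AE x in \<nu>. ennreal (f x) = RN_deriv \<nu> ?\<mu> x"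
    using fm by (intro RN_deriv_unique) auto
  from this AE_space have AEr: "AE x in \<nu>. enn2real (RN_deriv \<nu> ?\<mu> x) = f x"
  proof eventually_elim
    case (elim x) then show ?case using f0 by (metis enn2real_ennreal)
  qed
  let ?h = "\<lambda>x. f x * ln (f x) + exp (- 1)"
  have eqn: "(\<integral>\<^sup>+ w. ennreal (enn2real (RN_deriv \<nu> ?\<mu> w) * ln (enn2real (RN_deriv \<nu> ?\<mu> w)) + exp (-1)) \<partial>\<nu>)
      = (\<integral>\<^sup>+ w. ennreal (?h w) \<partial>\<nu>)"
    apply (rule nn_integral_cong_AE) using AEr by eventually_elim simp
  have h0: "0 \<le> ?h x" if xs: "x \<in> space \<nu>" for x
  proof (cases "0 < f x")
    case True
    have "1 + ln (1 / (exp 1 * f x)) \<le> exp (ln (1 / (exp 1 * f x)))" by (rule exp_ge_add_one_self)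
    then have "1 + ln (1 / (exp 1 * f x)) \<le> 1 / (exp 1 * f x)" using True by simp
    then have "1 - 1 - ln (f x) \<le> 1 / (exp 1 * f x)" using True by (simp add: ln_div ln_mult)
    then have "- ln (f x) * f x \<le> 1 / (exp 1 * f x) * f x" using True by (intro mult_right_mono) auto
    then show ?thesis using True by (simp add: exp_minus field_simps)
  next
    case False then have "f x = 0" using f0 xs by force
    then show ?thesis by simp
  qed
  have hm: "?h \<in> borel_measurable \<nu>" using fm by measurable
  show ?thesis
  proof (cases "integrable \<nu> (\<lambda>x. f x * ln (f x))")
    case True
    then have hi: "integrable \<nu> ?h" by auto
    have "(\<integral>\<^sup>+ w. ennreal (?h w) \<partial>\<nu>) = ennreal (\<integral>x. ?h x \<partial>\<nu>)"
      using hi h0 by (intro nn_integral_eq_integral) auto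
    moreover have "(\<integral>x. ?h x \<partial>\<nu>) = (\<integral>x. f x * ln (f x) \<partial>\<nu>) + exp (-1)"
      using True by (simp add: prob_space)
    moreover have "0 \<le> (\<integral>x. ?h x \<partial>\<nu>)" using h0 by (intro integral_nonneg_AE) auto
    ultimately show ?thesis using ac True unfolding Ent_def eqn
      by (simp add: enn2ereal_ennreal)
  next
    case False
    have "\<not> integrable \<nu> ?h"
    proof
      assume "integrable \<nu> ?h"
      from Bochner_Integration.integrable_diff[OF this integrable_const[of "exp (-1)"]]
      show False using False by simp
    qed
    moreover have "(\<integral>\<^sup>+ w. ennreal (norm (?h w)) \<partial>\<nu>) = (\<integral>\<^sup>+ w. ennreal (?h w) \<partial>\<nu>)"
      using h0 by (intro nn_integral_cong) auto
    ultimately have "(\<integral>\<^sup>+ w. ennreal (?h w) \<partial>\<nu>) = \<infinity>"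
      using hm by (auto simp: integrable_iff_bounded top_unique not_less)
    then show ?thesis using ac False unfolding Ent_def eqn by simp
  qed
qed

lemma abscont_density_real:
  assumes P: "prob_space \<nu>" and S: "sets \<mu> = sets \<nu>" and Q: "prob_space \<mu>"
    and ac: "absolutely_continuous \<nu> \<mu>"
  obtains f where "f \<in> borel_measurable \<nu>" "\<forall>x\<in>space \<nu>. 0 \<le> f x"
    "\<mu> = density \<nu> (\<lambda>x. ennreal (f x))"
proof -
  interpret prob_space \<nu> by fact
  interpret Q: prob_space \<mu> by fact
  have d: "density \<nu> (RN_deriv \<nu> \<mu>) = \<mu>" using ac S by (rule density_RN_deriv)
  have fin: "AE x in \<nu>. RN_deriv \<nu> \<mu> x \<noteq> \<infinity>"
    using ac S by (intro RN_deriv_finite) (auto simp: Q.sigma_finite_measure_axioms)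
  have "density \<nu> (\<lambda>x. ennreal (enn2real (RN_deriv \<nu> \<mu> x))) = density \<nu> (RN_deriv \<nu> \<mu>)"
    using fin by (intro density_cong) (auto elim!: AE_mp intro!: AE_I2 simp: ennreal_enn2real_if)
  then show ?thesis using d by (intro that[of "\<lambda>x. enn2real (RN_deriv \<nu> \<mu> x)"]) auto
qed


lemma feas_density_facts:
  fixes f g :: "'a \<Rightarrow> real"
  assumes P: "prob_space \<nu>" and fm: "f \<in> borel_measurable \<nu>" and f0: "\<forall>x\<in>space \<nu>. 0 \<le> f x"
    and gm: "g \<in> borel_measurable \<nu>" and g0: "\<And>x. x \<in> space \<nu> \<Longrightarrow> 0 \<le> g x"
    and s: "0 < s"
    and Q: "prob_space (density \<nu> (\<lambda>x. ennreal (f x)))"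
    and C: "(\<integral>\<^sup>+x. ennreal (g x) \<partial>density \<nu> (\<lambda>x. ennreal (f x))) \<le> ennreal s"
  shows "integrable \<nu> f" "(\<integral>x. f x \<partial>\<nu>) = 1" "integrable \<nu> (\<lambda>x. f x * g x)"
    "(\<integral>x. f x * g x \<partial>\<nu>) \<le> s"
proof -
  interpret prob_space \<nu> by fact
  interpret Q: prob_space "density \<nu> (\<lambda>x. ennreal (f x))" by fact
  have "emeasure (density \<nu> (\<lambda>x. ennreal (f x))) (space \<nu>) = 1"
    using Q.emeasure_space_1 by simp
  moreover have "emeasure (density \<nu> (\<lambda>x. ennreal (f x))) (space \<nu>) = (\<integral>\<^sup>+x. ennreal (f x) * indicator (space \<nu>) x \<partial>\<nu>)"
    using fm by (intro emeasure_density) auto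
  moreover have "(\<integral>\<^sup>+x. ennreal (f x) * indicator (space \<nu>) x \<partial>\<nu>) = (\<integral>\<^sup>+x. ennreal (f x) \<partial>\<nu>)"
    by (intro nn_integral_cong) (auto simp: indicator_def)
  ultimately have e1: "(\<integral>\<^sup>+x. ennreal (f x) \<partial>\<nu>) = 1" by simp
  show fi: "integrable \<nu> f" using e1 fm f0 by (intro integrableI_nonneg) auto
  have "ennreal (\<integral>x. f x \<partial>\<nu>) = 1" using e1 fi f0 by (subst nn_integral_eq_integral[symmetric]) auto
  then show "(\<integral>x. f x \<partial>\<nu>) = 1" by (simp add: ennreal_eq_1)
  have e2: "(\<integral>\<^sup>+x. ennreal (f x * g x) \<partial>\<nu>) \<le> ennreal s"
  proof -
    have "(\<integral>\<^sup>+x. ennreal (g x) \<partial>density \<nu> (\<lambda>x. ennreal (f x))) = (\<integral>\<^sup>+x. ennreal (f x) * ennreal (g x) \<partial>\<nu>)"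
      using fm gm by (intro nn_integral_density) auto
    also have "\<dots> = (\<integral>\<^sup>+x. ennreal (f x * g x) \<partial>\<nu>)"
      using f0 g0 by (intro nn_integral_cong) (simp add: ennreal_mult)
    finally show ?thesis using C by simp
  qed
  have fgm: "(\<lambda>x. f x * g x) \<in> borel_measurable \<nu>" using fm gm by measurable
  show fgi: "integrable \<nu> (\<lambda>x. f x * g x)"
  proof (rule integrableI_nonneg)
    show "(\<integral>\<^sup>+x. ennreal (f x * g x) \<partial>\<nu>) < \<infinity>" using e2 by (rule le_less_trans) simp
  qed (use fgm f0 g0 in auto)
  have "ennreal (\<integral>x. f x * g x \<partial>\<nu>) \<le> ennreal s"
    using e2 fgi f0 g0 by (subst nn_integral_eq_integral[symmetric]) (auto intro!: AE_I2)
  then show "(\<integral>x. f x * g x \<partial>\<nu>) \<le> s" using s by (simp add: ennreal_le_iff2)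
qed

lemma gibbs_minimizer:
  fixes g :: "'a \<Rightarrow> real" and s l K Z :: real
  assumes P: "prob_space \<nu>" and gm: "g \<in> borel_measurable \<nu>"
    and gb: "\<And>x. x \<in> space \<nu> \<Longrightarrow> 0 \<le> g x \<and> g x \<le> K"
    and l: "0 \<le> l" and s: "0 < s"
    and Zdef: "Z = (\<integral>x. exp (- l * g x) \<partial>\<nu>)"
    and sle: "(\<integral>x. exp (- l * g x) / Z * g x \<partial>\<nu>) \<le> s"
    and cs: "l = 0 \<or> (\<integral>x. exp (- l * g x) / Z * g x \<partial>\<nu>) = s"
    and feas_def: "\<And>\<mu>. feas \<mu> \<longleftrightarrow> sets \<mu> = sets \<nu> \<and> prob_space \<mu> \<and> (\<integral>\<^sup>+x. ennreal (g x) \<partial>\<mu>) \<le> ennreal s"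
  shows "feas (density \<nu> (\<lambda>x. ennreal (exp (- l * g x) / Z)))"
    and "\<And>\<mu>. feas \<mu> \<Longrightarrow> Ent \<nu> (density \<nu> (\<lambda>x. ennreal (exp (- l * g x) / Z))) \<le> Ent \<nu> \<mu>"
    and "\<And>\<mu>. feas \<mu> \<Longrightarrow> Ent \<nu> \<mu> \<le> Ent \<nu> (density \<nu> (\<lambda>x. ennreal (exp (- l * g x) / Z)))
           \<Longrightarrow> \<mu> = density \<nu> (\<lambda>x. ennreal (exp (- l * g x) / Z))"
proof -
  interpret prob_space \<nu> by fact
  define p where "p x = exp (- l * g x) / Z" for x
  obtain x0 where "x0 \<in> space \<nu>" using not_empty by blast
  then have K: "0 \<le> K" using gb[of x0] by linarith
  have em: "(\<lambda>x. exp (- l * g x)) \<in> borel_measurable \<nu>" using gm by measurable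
  have eb: "exp (- l * K) \<le> exp (- l * g x) \<and> exp (- l * g x) \<le> 1" if "x \<in> space \<nu>" for x
    using gb[OF that] l by (auto simp: mult_left_mono)
  have ei: "integrable \<nu> (\<lambda>x. exp (- l * g x))"
    using eb em by (intro integrable_const_bound[where B=1]) auto
  have "exp (- l * K) \<le> Z" unfolding Zdef
    using integral_mono[OF integrable_const[of "exp (- l * K)"] ei] eb by (auto simp: prob_space)
  then have Z: "0 < Z" by (rule less_le_trans[rotated]) simp
  have pm: "p \<in> borel_measurable \<nu>" unfolding p_def using em by measurable
  have ppos: "0 < p x" for x unfolding p_def using Z by simp
  have pb: "p x \<le> 1 / Z" if "x \<in> space \<nu>" for x
    unfolding p_def using eb[OF that] Z by (simp add: divide_right_mono)
  have pi: "integrable \<nu> p"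
    using pb ppos pm by (intro integrable_const_bound[where B="1/Z"]) (auto simp: less_imp_le)
  have "(\<integral>x. p x \<partial>\<nu>) = (\<integral>x. exp (- l * g x) \<partial>\<nu>) / Z" unfolding p_def by simp
  then have p1: "(\<integral>x. p x \<partial>\<nu>) = 1" using Z Zdef by simp
  have lnp: "ln (p x) = - l * g x - ln Z" for x unfolding p_def using Z by (simp add: ln_div)
  have pgb: "norm (p x * g x) \<le> 1 / Z * K" if "x \<in> space \<nu>" for x
  proof -
    have "p x * g x \<le> 1 / Z * K" using pb[OF that] gb[OF that] ppos[of x] Z by (intro mult_mono) auto
    moreover have "0 \<le> p x * g x" using gb[OF that] ppos[of x] by simp
    ultimately show ?thesis by simp
  qed
  have pgi: "integrable \<nu> (\<lambda>x. p x * g x)"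
    using pgb pm gm by (intro integrable_const_bound[where B="1/Z * K"]) (auto intro!: AE_I2)
  have pg: "l * (\<integral>x. p x * g x \<partial>\<nu>) = l * s" using cs unfolding p_def by auto
  have pg2: "(\<integral>x. p x * g x \<partial>\<nu>) \<le> s" using sle unfolding p_def by auto
  have plnp_eq: "p x * ln (p x) = - l * (p x * g x) - ln Z * p x" for x
    unfolding lnp by (simp add: algebra_simps)
  have plnpi: "integrable \<nu> (\<lambda>x. p x * ln (p x))"
    unfolding plnp_eq using pgi pi by auto
  have plnp: "(\<integral>x. p x * ln (p x) \<partial>\<nu>) = - l * s - ln Z"
    unfolding plnp_eq using pgi pi pg p1 by simp
  have Ep: "Ent \<nu> (density \<nu> (\<lambda>x. ennreal (p x))) = ereal (- l * s - ln Z)"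
    using Ent_density[OF P pm] ppos plnpi plnp by (simp add: less_imp_le)
  have Pd: "(\<lambda>x. ennreal (exp (- l * g x) / Z)) = (\<lambda>x. ennreal (p x))" unfolding p_def ..
  show F: "feas (density \<nu> (\<lambda>x. ennreal (exp (- l * g x) / Z)))"
    unfolding Pd feas_def
  proof (intro conjI)
    show "sets (density \<nu> (\<lambda>x. ennreal (p x))) = sets \<nu>" by simp
    have "emeasure (density \<nu> (\<lambda>x. ennreal (p x))) (space \<nu>) = (\<integral>\<^sup>+x. ennreal (p x) * indicator (space \<nu>) x \<partial>\<nu>)"
      using pm by (intro emeasure_density) auto
    also have "\<dots> = (\<integral>\<^sup>+x. ennreal (p x) \<partial>\<nu>)"
      by (intro nn_integral_cong) (auto simp: indicator_def)
    also have "\<dots> = ennreal (\<integral>x. p x \<partial>\<nu>)"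
      using pi ppos by (intro nn_integral_eq_integral) (auto simp: less_imp_le)
    finally show "prob_space (density \<nu> (\<lambda>x. ennreal (p x)))"
      using p1 by (intro prob_spaceI) simp
    have "(\<integral>\<^sup>+x. ennreal (g x) \<partial>density \<nu> (\<lambda>x. ennreal (p x))) = (\<integral>\<^sup>+x. ennreal (p x) * ennreal (g x) \<partial>\<nu>)"
      using pm gm by (intro nn_integral_density) auto
    also have "\<dots> = (\<integral>\<^sup>+x. ennreal (p x * g x) \<partial>\<nu>)"
      using ppos gb by (intro nn_integral_cong) (simp add: ennreal_mult less_imp_le)
    also have "\<dots> = ennreal (\<integral>x. p x * g x \<partial>\<nu>)"
      using pgi ppos gb by (intro nn_integral_eq_integral) (auto intro!: AE_I2 simp: less_imp_le)
    also have "\<dots> \<le> ennreal s" using pg2 by (rule ennreal_leI)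
    finally show "(\<integral>\<^sup>+x. ennreal (g x) \<partial>density \<nu> (\<lambda>x. ennreal (p x))) \<le> ennreal s" .
  qed
  have main: "- l * s - ln Z \<le> (\<integral>x. f x * ln (f x) \<partial>\<nu>) \<and>
      ((\<integral>x. f x * ln (f x) \<partial>\<nu>) \<le> - l * s - ln Z \<longrightarrow> (AE x in \<nu>. f x = p x))"
    if fm: "f \<in> borel_measurable \<nu>" and f0: "\<forall>x\<in>space \<nu>. 0 \<le> f x"
      and fe: "feas (density \<nu> (\<lambda>x. ennreal (f x)))"
      and fli: "integrable \<nu> (\<lambda>x. f x * ln (f x))" for f
  proof -
    have Q: "prob_space (density \<nu> (\<lambda>x. ennreal (f x)))"
      and C: "(\<integral>\<^sup>+x. ennreal (g x) \<partial>density \<nu> (\<lambda>x. ennreal (f x))) \<le> ennreal s"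
      using fe unfolding feas_def by auto
    note ff = feas_density_facts[OF P fm f0 gm _ s Q C]
    have fi: "integrable \<nu> f" and f1: "(\<integral>x. f x \<partial>\<nu>) = 1"
      and fgi: "integrable \<nu> (\<lambda>x. f x * g x)" and fg: "(\<integral>x. f x * g x \<partial>\<nu>) \<le> s"
      using ff gb by auto
    define D where "D x = f x * ln (f x) - (f x * ln (p x) + f x - p x)" for x
    have D0: "0 \<le> D x" if "x \<in> space \<nu>" for x
      unfolding D_def using xlnx_ineq[of "f x" "p x"] f0 that ppos by auto
    have Deq: "D x = f x * ln (f x) + l * (f x * g x) + ln Z * f x - f x + p x" for x
      unfolding D_def lnp by (simp add: algebra_simps)
    have Di: "integrable \<nu> D" unfolding Deq using fli fgi fi pi by auto
    have DI: "(\<integral>x. D x \<partial>\<nu>) = (\<integral>x. f x * ln (f x) \<partial>\<nu>) + l * (\<integral>x. f x * g x \<partial>\<nu>) + ln Z"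
      unfolding Deq using fli fgi fi pi f1 p1 by simp
    have "l * (\<integral>x. f x * g x \<partial>\<nu>) \<le> l * s" using fg l by (rule mult_left_mono)
    moreover have "0 \<le> (\<integral>x. D x \<partial>\<nu>)" using D0 by (intro integral_nonneg_AE) auto
    ultimately have 1: "- l * s - ln Z \<le> (\<integral>x. f x * ln (f x) \<partial>\<nu>)" using DI by linarith
    have 2: "AE x in \<nu>. f x = p x" if le: "(\<integral>x. f x * ln (f x) \<partial>\<nu>) \<le> - l * s - ln Z"
    proof -
      have "(\<integral>x. D x \<partial>\<nu>) \<le> 0" using DI le \<open>l * (\<integral>x. f x * g x \<partial>\<nu>) \<le> l * s\<close> by linarith
      then have "(\<integral>x. D x \<partial>\<nu>) = 0" using \<open>0 \<le> (\<integral>x. D x \<partial>\<nu>)\<close> by linarith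
      then have "AE x in \<nu>. D x = 0" using Di D0 by (subst (asm) integral_nonneg_eq_0_iff_AE) auto
      then show ?thesis
      proof (rule AE_mp, intro AE_I2 impI)
        fix x assume "x \<in> space \<nu>" "D x = 0"
        then show "f x = p x" using xlnx_eq[of "f x" "p x"] f0 ppos unfolding D_def by auto
      qed
    qed
    show ?thesis using 1 2 by blast
  qed
  have reduce: "\<exists>f. f \<in> borel_measurable \<nu> \<and> (\<forall>x\<in>space \<nu>. 0 \<le> f x) \<and> \<mu> = density \<nu> (\<lambda>x. ennreal (f x))"
    if "feas \<mu>" "absolutely_continuous \<nu> \<mu>" for \<mu>
  proof -
    have "sets \<mu> = sets \<nu>" "prob_space \<mu>" using that unfolding feas_def by auto
    from abscont_density_real[OF P this that(2)] show ?thesis by metis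
  qed
  show "Ent \<nu> (density \<nu> (\<lambda>x. ennreal (exp (- l * g x) / Z))) \<le> Ent \<nu> \<mu>" if fe: "feas \<mu>" for \<mu>
  proof (cases "absolutely_continuous \<nu> \<mu>")
    case False then show ?thesis by (simp add: Ent_def)
  next
    case True
    then obtain f where fm: "f \<in> borel_measurable \<nu>" and f0: "\<forall>x\<in>space \<nu>. 0 \<le> f x"
      and mu: "\<mu> = density \<nu> (\<lambda>x. ennreal (f x))" using reduce fe by blast
    show ?thesis
    proof (cases "integrable \<nu> (\<lambda>x. f x * ln (f x))")
      case False then show ?thesis unfolding mu using Ent_density[OF P fm f0] by simp
    next
      case True
      then show ?thesis unfolding mu Pd Ep using Ent_density[OF P fm f0] main[OF fm f0 fe[unfolded mu] True] by simp
    qed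
  qed
  show "\<mu> = density \<nu> (\<lambda>x. ennreal (exp (- l * g x) / Z))"
    if fe: "feas \<mu>" and le: "Ent \<nu> \<mu> \<le> Ent \<nu> (density \<nu> (\<lambda>x. ennreal (exp (- l * g x) / Z)))" for \<mu>
  proof (cases "absolutely_continuous \<nu> \<mu>")
    case False then show ?thesis using le unfolding Pd Ep by (simp add: Ent_def)
  next
    case True
    then obtain f where fm: "f \<in> borel_measurable \<nu>" and f0: "\<forall>x\<in>space \<nu>. 0 \<le> f x"
      and mu: "\<mu> = density \<nu> (\<lambda>x. ennreal (f x))" using reduce fe by blast
    show ?thesis
    proof (cases "integrable \<nu> (\<lambda>x. f x * ln (f x))")
      case False then show ?thesis using le unfolding mu Pd Ep using Ent_density[OF P fm f0] by simp
    next
      case True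
      then have "(\<integral>x. f x * ln (f x) \<partial>\<nu>) \<le> - l * s - ln Z"
        using le unfolding mu Pd Ep using Ent_density[OF P fm f0] by simp
      then have "AE x in \<nu>. f x = p x" using main[OF fm f0 fe[unfolded mu] True] by blast
      then have "density \<nu> (\<lambda>x. ennreal (f x)) = density \<nu> (\<lambda>x. ennreal (p x))"
        using fm pm by (intro density_cong) (auto elim!: AE_mp)
      then show ?thesis unfolding mu Pd .
    qed
  qed
qed


lemma prob_integral_diff_bound:
  fixes a b :: "'a \<Rightarrow> real"
  assumes P: "prob_space \<nu>" and ai: "integrable \<nu> a" and bi: "integrable \<nu> b"
    and bd: "\<And>x. x \<in> space \<nu> \<Longrightarrow> \<bar>a x - b x\<bar> \<le> c"
  shows "\<bar>(\<integral>x. a x \<partial>\<nu>) - (\<integral>x. b x \<partial>\<nu>)\<bar> \<le> c"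
proof -
  interpret prob_space \<nu> by fact
  have e: "(\<integral>x. a x \<partial>\<nu>) - (\<integral>x. b x \<partial>\<nu>) = (\<integral>x. a x - b x \<partial>\<nu>)" using ai bi by simp
  have "(\<integral>x. a x - b x \<partial>\<nu>) \<le> (\<integral>x. c \<partial>\<nu>)"
    using ai bi bd by (intro integral_mono) (auto simp: abs_le_iff)
  moreover have "(\<integral>x. b x - a x \<partial>\<nu>) \<le> (\<integral>x. c \<partial>\<nu>)"
    using ai bi bd by (intro integral_mono) (auto simp: abs_le_iff)
  moreover have "(\<integral>x. b x - a x \<partial>\<nu>) = - (\<integral>x. a x - b x \<partial>\<nu>)" using ai bi by simp
  ultimately show ?thesis unfolding e by (simp add: prob_space abs_le_iff)
qed

lemma gibbs_exists:
  fixes g :: "'a \<Rightarrow> real" and K s :: real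
  assumes P: "prob_space \<nu>" and gm: "g \<in> borel_measurable \<nu>"
    and gb: "\<And>x. x \<in> space \<nu> \<Longrightarrow> 0 \<le> g x \<and> g x \<le> K" and K: "0 < K"
    and pos: "\<And>e. 0 < e \<Longrightarrow> 0 < measure \<nu> {x \<in> space \<nu>. g x < e}"
    and s: "0 < s"
  shows "\<exists>l\<ge>0. (\<integral>x. exp (- l * g x) / (\<integral>y. exp (- l * g y) \<partial>\<nu>) * g x \<partial>\<nu>) \<le> s \<and>
     (l = 0 \<or> (\<integral>x. exp (- l * g x) / (\<integral>y. exp (- l * g y) \<partial>\<nu>) * g x \<partial>\<nu>) = s)"
proof -
  interpret prob_space \<nu> by fact
  define Zf where "Zf l = (\<integral>y. exp (- l * g y) \<partial>\<nu>)" for l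
  define Nf where "Nf l = (\<integral>y. exp (- l * g y) * g y \<partial>\<nu>)" for l
  have em: "(\<lambda>x. exp (- l * g x)) \<in> borel_measurable \<nu>" for l using gm by measurable
  have emg: "(\<lambda>x. exp (- l * g x) * g x) \<in> borel_measurable \<nu>" for l using gm by measurable
  have eb: "exp (- l * K) \<le> exp (- l * g x) \<and> exp (- l * g x) \<le> 1" if "x \<in> space \<nu>" "0 \<le> l" for x l
    using gb[OF that(1)] that(2) by (auto simp: mult_left_mono)
  have ei: "integrable \<nu> (\<lambda>x. exp (- l * g x))" if "0 \<le> l" for l
    using eb[OF _ that] em by (intro integrable_const_bound[where B=1]) auto
  have egb: "norm (exp (- l * g x) * g x) \<le> K" if "x \<in> space \<nu>" "0 \<le> l" for x l
  proof -
    have "exp (- l * g x) * g x \<le> 1 * K" using eb[OF that] gb[OF that(1)] by (intro mult_mono) auto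
    then show ?thesis using gb[OF that(1)] by simp
  qed
  have egi: "integrable \<nu> (\<lambda>x. exp (- l * g x) * g x)" if "0 \<le> l" for l
    using egb[OF _ that] emg by (intro integrable_const_bound[where B=K]) auto
  have Zlow: "exp (- l * K) \<le> Zf l" if "0 \<le> l" for l unfolding Zf_def
    using integral_mono[OF integrable_const[of "exp (- l * K)"] ei[OF that]] eb[OF _ that] by (auto simp: prob_space)
  have Zpos: "0 < Zf l" if "0 \<le> l" for l using Zlow[OF that] by (rule less_le_trans[rotated]) simp
  have form: "(\<integral>x. exp (- l * g x) / (\<integral>y. exp (- l * g y) \<partial>\<nu>) * g x \<partial>\<nu>) = Nf l / Zf l" for l
  proof -
    have "(\<integral>x. exp (- l * g x) / (\<integral>y. exp (- l * g y) \<partial>\<nu>) * g x \<partial>\<nu>)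
      = (\<integral>x. exp (- l * g x) * g x / Zf l \<partial>\<nu>)" unfolding Zf_def by (simp add: field_simps)
    also have "\<dots> = Nf l / Zf l" unfolding Nf_def by (rule integral_divide_zero)
    finally show ?thesis .
  qed
  have ptl: "\<bar>exp (- l * g x) - exp (- l' * g x)\<bar> \<le> K * \<bar>l - l'\<bar>"
    if "x \<in> space \<nu>" "0 \<le> l" "0 \<le> l'" for x l l'
  proof -
    have "\<bar>exp (- (l * g x)) - exp (- (l' * g x))\<bar> \<le> \<bar>l * g x - l' * g x\<bar>"
      using gb[OF that(1)] that by (intro exp_neg_lipschitz) auto
    also have "\<dots> = g x * \<bar>l - l'\<bar>" using gb[OF that(1)] by (simp add: abs_mult left_diff_distrib[symmetric])
    also have "\<dots> \<le> K * \<bar>l - l'\<bar>" using gb[OF that(1)] by (intro mult_right_mono) auto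
    finally show ?thesis by simp
  qed
  have Zlip: "\<bar>Zf l - Zf l'\<bar> \<le> K * \<bar>l - l'\<bar>" if "0 \<le> l" "0 \<le> l'" for l l'
    unfolding Zf_def using that by (intro prob_integral_diff_bound[OF P] ei ptl) auto
  have Nlip: "\<bar>Nf l - Nf l'\<bar> \<le> (K * K) * \<bar>l - l'\<bar>" if "0 \<le> l" "0 \<le> l'" for l l'
    unfolding Nf_def
  proof (intro prob_integral_diff_bound[OF P] egi that)
    fix x assume x: "x \<in> space \<nu>"
    have "\<bar>exp (- l * g x) * g x - exp (- l' * g x) * g x\<bar> = \<bar>exp (- l * g x) - exp (- l' * g x)\<bar> * g x"
      using gb[OF x] by (simp add: abs_mult left_diff_distrib[symmetric])
    also have "\<dots> \<le> (K * \<bar>l - l'\<bar>) * K" using gb[OF x] ptl[OF x that] by (intro mult_mono) auto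
    finally show "\<bar>exp (- l * g x) * g x - exp (- l' * g x) * g x\<bar> \<le> (K * K) * \<bar>l - l'\<bar>" by (simp add: ac_simps)
  qed
  have contZ: "continuous_on {0..} Zf"
  proof (rule lipschitz_on_continuous_on)
    show "K-lipschitz_on {0..} Zf" using Zlip K by (intro lipschitz_onI) (auto simp: dist_real_def)
  qed
  have contN: "continuous_on {0..} Nf"
  proof (rule lipschitz_on_continuous_on)
    show "(K*K)-lipschitz_on {0..} Nf" using Nlip K by (intro lipschitz_onI) (auto simp: dist_real_def)
  qed
  have contPhi: "continuous_on {0..} (\<lambda>l. Nf l / Zf l)"
    using contZ contN Zpos by (intro continuous_on_divide) (auto simp: less_imp_le dest: less_imp_neq[THEN not_sym])
  show ?thesis
  proof (cases "(\<integral>x. g x \<partial>\<nu>) \<le> s")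
    case True
    have "Zf 0 = 1" unfolding Zf_def by (simp add: prob_space)
    moreover have "Nf 0 = (\<integral>x. g x \<partial>\<nu>)" unfolding Nf_def by simp
    ultimately have "Nf 0 / Zf 0 \<le> s" using True by simp
    then show ?thesis unfolding form by (intro exI[of _ 0]) simp
  next
    case False
    define e where "e = s / 2"
    have e: "0 < e" using s unfolding e_def by simp
    define A where "A = {x \<in> space \<nu>. g x < e / 2}"
    define m where "m = measure \<nu> A"
    have m: "0 < m" unfolding m_def A_def using pos[of "e/2"] e by simp
    have Am: "A \<in> sets \<nu>" unfolding A_def using gm by measurable
    define \<Lambda> where "\<Lambda> = max 0 (- 2 * ln (e * m / K) / e)"
    have L0: "0 \<le> \<Lambda>" unfolding \<Lambda>_def by simp
    have emK: "0 < e * m / K" using e m K by simp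
    have "- (\<Lambda> * e / 2) \<le> ln (e * m / K)"
    proof -
      have "- 2 * ln (e * m / K) / e \<le> \<Lambda>" unfolding \<Lambda>_def by simp
      then have "(- 2 * ln (e * m / K) / e) * e \<le> \<Lambda> * e" using e by (intro mult_right_mono) auto
      then have "- 2 * ln (e * m / K) \<le> \<Lambda> * e" using e by simp
      then show ?thesis by simp
    qed
    then have expb: "exp (- (\<Lambda> * e / 2)) \<le> e * m / K"
      using emK by (metis exp_le_cancel_iff exp_ln)
    have Zb: "exp (- (\<Lambda> * e / 2)) * m \<le> Zf \<Lambda>"
    proof -
      have "(\<integral>x. exp (- (\<Lambda> * e / 2)) * indicator A x \<partial>\<nu>) \<le> Zf \<Lambda>"
        unfolding Zf_def
      proof (rule integral_mono)
        show "integrable \<nu> (\<lambda>x. exp (- (\<Lambda> * e / 2)) * indicator A x)"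
          using Am by (intro integrable_mult_right integrable_real_indicator) (auto simp: emeasure_eq_measure)
        show "integrable \<nu> (\<lambda>x. exp (- \<Lambda> * g x))" by (rule ei[OF L0])
        fix x assume x: "x \<in> space \<nu>"
        show "exp (- (\<Lambda> * e / 2)) * indicator A x \<le> exp (- \<Lambda> * g x)"
        proof (cases "x \<in> A")
          case True
          then have "g x \<le> e / 2" unfolding A_def by simp
          then have "\<Lambda> * g x \<le> \<Lambda> * (e / 2)" using L0 by (rule mult_left_mono)
          then show ?thesis using True by simp
        qed simp
      qed
      moreover have "(\<integral>x. exp (- (\<Lambda> * e / 2)) * indicator A x \<partial>\<nu>) = exp (- (\<Lambda> * e / 2)) * m"
        unfolding m_def using Am by simp
      ultimately show ?thesis by simp
    qed
    have Nb: "Nf \<Lambda> \<le> e * Zf \<Lambda> + K * exp (- (\<Lambda> * e))"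
    proof -
      have "Nf \<Lambda> \<le> (\<integral>x. e * exp (- \<Lambda> * g x) + K * exp (- (\<Lambda> * e)) \<partial>\<nu>)"
        unfolding Nf_def
      proof (rule integral_mono)
        show "integrable \<nu> (\<lambda>x. exp (- \<Lambda> * g x) * g x)" by (rule egi[OF L0])
        show "integrable \<nu> (\<lambda>x. e * exp (- \<Lambda> * g x) + K * exp (- (\<Lambda> * e)))"
          using ei[OF L0] by auto
        fix x assume x: "x \<in> space \<nu>"
        show "exp (- \<Lambda> * g x) * g x \<le> e * exp (- \<Lambda> * g x) + K * exp (- (\<Lambda> * e))"
        proof (cases "g x \<le> e")
          case True
          then have "exp (- \<Lambda> * g x) * g x \<le> exp (- \<Lambda> * g x) * e" by (intro mult_left_mono) auto
          then show ?thesis using K by (simp add: mult.commute add_increasing2)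
        next
          case False
          then have "\<Lambda> * e \<le> \<Lambda> * g x" using L0 by (intro mult_left_mono) auto
          then have "exp (- \<Lambda> * g x) \<le> exp (- (\<Lambda> * e))" by simp
          then have "exp (- \<Lambda> * g x) * g x \<le> exp (- (\<Lambda> * e)) * K" using gb[OF x] by (intro mult_mono) auto
          moreover have "0 \<le> e * exp (- \<Lambda> * g x)" using e by simp
          ultimately show ?thesis by (simp add: mult.commute)
        qed
      qed
      also have "\<dots> = e * Zf \<Lambda> + K * exp (- (\<Lambda> * e))"
        unfolding Zf_def using ei[OF L0] by (simp add: prob_space)
      finally show ?thesis .
    qed
    have ZL: "0 < Zf \<Lambda>" using Zpos[OF L0] .
    have "Nf \<Lambda> / Zf \<Lambda> \<le> e + K * exp (- (\<Lambda> * e)) / Zf \<Lambda>"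
    proof -
      have "Nf \<Lambda> / Zf \<Lambda> \<le> (e * Zf \<Lambda> + K * exp (- (\<Lambda> * e))) / Zf \<Lambda>"
        using Nb ZL by (intro divide_right_mono) auto
      also have "\<dots> = e + K * exp (- (\<Lambda> * e)) / Zf \<Lambda>" using ZL by (simp add: add_divide_distrib)
      finally show ?thesis .
    qed
    also have "K * exp (- (\<Lambda> * e)) / Zf \<Lambda> \<le> K * exp (- (\<Lambda> * e)) / (exp (- (\<Lambda> * e / 2)) * m)"
      using Zb ZL m K by (intro divide_left_mono) auto
    also have "K * exp (- (\<Lambda> * e)) / (exp (- (\<Lambda> * e / 2)) * m) = K / m * exp (- (\<Lambda> * e / 2))"
    proof -
      have "exp (- (\<Lambda> * e)) = exp (- (\<Lambda> * e / 2)) * exp (- (\<Lambda> * e / 2))"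
        by (simp flip: exp_add)
      then show ?thesis using m by (simp add: field_simps)
    qed
    also have "K / m * exp (- (\<Lambda> * e / 2)) \<le> K / m * (e * m / K)"
      using expb K m by (intro mult_left_mono) auto
    also have "K / m * (e * m / K) = e" using K m by simp
    finally have PhiL: "Nf \<Lambda> / Zf \<Lambda> \<le> s" unfolding e_def by simp
    have Phi0: "s \<le> Nf 0 / Zf 0"
    proof -
      have "Zf 0 = 1" unfolding Zf_def by (simp add: prob_space)
      moreover have "Nf 0 = (\<integral>x. g x \<partial>\<nu>)" unfolding Nf_def by simp
      ultimately show ?thesis using False by simp
    qed
    have "continuous_on {0..\<Lambda>} (\<lambda>l. Nf l / Zf l)"
      using contPhi by (rule continuous_on_subset) auto
    from IVT2'[of "\<lambda>l. Nf l / Zf l", OF PhiL Phi0 L0 this]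
    obtain l where "0 \<le> l" "Nf l / Zf l = s" by blast
    then show ?thesis unfolding form by (intro exI[of _ l]) simp
  qed
qed


lemma maxent_structure:
  fixes \<rho> :: "'a \<Rightarrow> 'a \<Rightarrow> real" and R K :: real and A :: "'a set"
  assumes gdef: "g = (\<lambda>w. (trunc_dist \<rho> R A w)\<^sup>2)"
  assumes P: "prob_space \<nu>" and gm: "g \<in> borel_measurable \<nu>"
    and gb: "\<And>x. x \<in> space \<nu> \<Longrightarrow> 0 \<le> g x \<and> g x \<le> K" and K: "0 < K"
    and pos: "\<And>e. 0 < e \<Longrightarrow> 0 < measure \<nu> {x \<in> space \<nu>. g x < e}"
    and \<sigma>: "0 < \<sigma>"
  shows "\<exists>!\<mu>. maxent_minimizer \<nu> \<rho> R A \<sigma> \<mu>"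
    and "\<exists>l Z. 0 \<le> l \<and> 0 < Z \<and>
          (THE \<mu>. maxent_minimizer \<nu> \<rho> R A \<sigma> \<mu>) = density \<nu> (\<lambda>x. ennreal (exp (- l * g x) / Z)) \<and>
          maxent_feasible \<nu> \<rho> R A \<sigma> (THE \<mu>. maxent_minimizer \<nu> \<rho> R A \<sigma> \<mu>)"
proof -
  interpret prob_space \<nu> by fact
  have s: "0 < \<sigma>\<^sup>2" using \<sigma> by simp
  obtain l where l: "0 \<le> l"
    and sle: "(\<integral>x. exp (- l * g x) / (\<integral>y. exp (- l * g y) \<partial>\<nu>) * g x \<partial>\<nu>) \<le> \<sigma>\<^sup>2"
    and cs: "l = 0 \<or> (\<integral>x. exp (- l * g x) / (\<integral>y. exp (- l * g y) \<partial>\<nu>) * g x \<partial>\<nu>) = \<sigma>\<^sup>2"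
    using gibbs_exists[OF P gm gb K pos s] by blast
  define Z where "Z = (\<integral>y. exp (- l * g y) \<partial>\<nu>)"
  have fd: "maxent_feasible \<nu> \<rho> R A \<sigma> \<mu> \<longleftrightarrow> sets \<mu> = sets \<nu> \<and> prob_space \<mu> \<and> (\<integral>\<^sup>+x. ennreal (g x) \<partial>\<mu>) \<le> ennreal (\<sigma>\<^sup>2)" for \<mu>
    unfolding maxent_feasible_def gdef ..
  have sle': "(\<integral>x. exp (- l * g x) / Z * g x \<partial>\<nu>) \<le> \<sigma>\<^sup>2" using sle unfolding Z_def .
  have cs': "l = 0 \<or> (\<integral>x. exp (- l * g x) / Z * g x \<partial>\<nu>) = \<sigma>\<^sup>2" using cs unfolding Z_def .
  note G = gibbs_minimizer[where feas="maxent_feasible \<nu> \<rho> R A \<sigma>" and g=g and K=K and l=l and s="\<sigma>\<^sup>2" and Z=Z and \<nu>=\<nu>,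
     OF P gm gb l s Z_def sle' cs' fd]
  let ?m = "density \<nu> (\<lambda>x. ennreal (exp (- l * g x) / Z))"
  have min: "maxent_minimizer \<nu> \<rho> R A \<sigma> ?m" unfolding maxent_minimizer_def using G(1,2) by blast
  have uniq: "\<mu> = ?m" if "maxent_minimizer \<nu> \<rho> R A \<sigma> \<mu>" for \<mu>
    using that G(1,3) unfolding maxent_minimizer_def by blast
  show ex1: "\<exists>!\<mu>. maxent_minimizer \<nu> \<rho> R A \<sigma> \<mu>" using min uniq by blast
  have the: "(THE \<mu>. maxent_minimizer \<nu> \<rho> R A \<sigma> \<mu>) = ?m" using min uniq by (rule the_equality)
  have Zpos: "0 < Z"
  proof -
    obtain x0 where "x0 \<in> space \<nu>" using not_empty by blast
    then have K0: "0 \<le> K" using gb[of x0] by linarith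
    have "(\<integral>y. exp (- l * K) \<partial>\<nu>) \<le> Z" unfolding Z_def
    proof (rule integral_mono)
      show "integrable \<nu> (\<lambda>x. exp (- l * g x))"
        using gm gb l by (intro integrable_const_bound[where B=1]) (auto intro!: AE_I2 mult_nonneg_nonneg)
      fix x assume "x \<in> space \<nu>" then show "exp (- l * K) \<le> exp (- l * g x)" using gb l by (auto intro: mult_left_mono)
    qed simp
    moreover have "(\<integral>y. exp (- l * K) \<partial>\<nu>) = exp (- l * K)" by (simp add: prob_space)
    ultimately show ?thesis by (metis exp_gt_zero less_le_trans)
  qed
  show "\<exists>l Z. 0 \<le> l \<and> 0 < Z \<and>
          (THE \<mu>. maxent_minimizer \<nu> \<rho> R A \<sigma> \<mu>) = density \<nu> (\<lambda>x. ennreal (exp (- l * g x) / Z)) \<and>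
          maxent_feasible \<nu> \<rho> R A \<sigma> (THE \<mu>. maxent_minimizer \<nu> \<rho> R A \<sigma> \<mu>)"
    unfolding the using l Zpos G(1) by (intro exI[of _ l] exI[of _ Z]) simp
qed


lemma round_nearest:
  fixes y :: real shows "\<bar>y - of_int (round y)\<bar> \<le> \<bar>y - of_int n\<bar>"
proof (cases "\<bar>y - of_int n\<bar> < 1/2")
  case True then have "round y = n" by (rule round_unique')
  then show ?thesis by simp
next
  case False then show ?thesis using of_int_round_abs_le[of y] by linarith
qed

lemma per_mod_le:
  assumes p: "0 < p" shows "per_mod x p \<le> \<bar>x - p * of_int n\<bar>"
proof -
  have e: "\<bar>x - p * r\<bar> = p * \<bar>x / p - r\<bar>" for r
  proof -
    have "x - p * r = p * (x / p - r)" using p by (simp add: field_simps)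
    then show ?thesis using p by (simp add: abs_mult)
  qed
  have "per_mod x p = p * \<bar>x / p - of_int (round (x / p))\<bar>"
    unfolding per_mod_def by (rule e)
  also have "\<dots> \<le> p * \<bar>x / p - of_int n\<bar>" using p round_nearest by (intro mult_left_mono) auto
  also have "\<dots> = \<bar>x - p * of_int n\<bar>" by (rule e[symmetric])
  finally show ?thesis .
qed

lemma per_mod_nonneg: "0 \<le> per_mod x p" unfolding per_mod_def by simp

lemma per_mod_attained: "\<exists>n::int. per_mod x p = \<bar>x - p * of_int n\<bar>"
  unfolding per_mod_def by blast

lemma per_mod_le_abs: "0 < p \<Longrightarrow> per_mod x p \<le> \<bar>x\<bar>"
  using per_mod_le[of p x 0] by simp

lemma per_mod_zero: "0 < p \<Longrightarrow> per_mod 0 p = 0"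
  using per_mod_le_abs[of p 0] per_mod_nonneg[of 0 p] by simp

lemma per_mod_eq:
  assumes p: "0 < p" and lb: "\<And>n::int. v \<le> \<bar>x - p * of_int n\<bar>" and at: "v = \<bar>x - p * of_int m\<bar>"
  shows "per_mod x p = v"
  using per_mod_le[OF p, of x m] per_mod_attained[of x p] lb at by (metis order_antisym)

lemma per_mod_pi_small:
  assumes "\<bar>x\<bar> < pi / 2" shows "per_mod x pi = \<bar>x\<bar>"
proof (rule per_mod_eq[where m=0])
  fix n :: int
  show "\<bar>x\<bar> \<le> \<bar>x - pi * of_int n\<bar>"
  proof (cases "n = 0")
    case False
    then have "1 \<le> \<bar>of_int n :: real\<bar>" by linarith
    then have "pi \<le> \<bar>pi * of_int n\<bar>" by (simp add: abs_mult)
    then show ?thesis using assms by linarith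
  qed simp
qed (use pi_gt_zero in auto)

lemma per_mod_2pi_small:
  assumes "\<bar>x\<bar> \<le> pi" shows "per_mod x (2 * pi) = \<bar>x\<bar>"
proof (rule per_mod_eq[where m=0])
  fix n :: int
  show "\<bar>x\<bar> \<le> \<bar>x - 2 * pi * of_int n\<bar>"
  proof (cases "n = 0")
    case False
    then have "1 \<le> \<bar>of_int n :: real\<bar>" by linarith
    then have "2 * pi \<le> \<bar>2 * pi * of_int n\<bar>" by (simp add: abs_mult)
    then show ?thesis using assms by linarith
  qed simp
qed (use pi_gt_zero in auto)

lemma per_mod_2pi_shift:
  assumes "-pi < x" "x \<le> pi" shows "per_mod (x - pi) (2 * pi) = pi - \<bar>x\<bar>"
proof (cases "x \<le> 0")
  case True
  show ?thesis
  proof (rule per_mod_eq[where m="-1"])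
    fix n :: int
    show "pi - \<bar>x\<bar> \<le> \<bar>x - pi - 2 * pi * of_int n\<bar>"
    proof (cases "n = -1")
      case False
      then have "n \<le> -2 \<or> 0 \<le> n" by linarith
      then show ?thesis
      proof
        assume "n \<le> -2" then have "of_int n \<le> (-2::real)" by simp
        then have "2 * pi * of_int n \<le> 2 * pi * (-2)" using pi_gt_zero by (intro mult_left_mono) auto
        then show ?thesis using assms True by linarith
      next
        assume "0 \<le> n" then have "0 \<le> (of_int n::real)" by simp
        then have "0 \<le> 2 * pi * of_int n" using pi_gt_zero by simp
        then show ?thesis using assms True by linarith
      qed
    qed (use True assms in simp)
  qed (use True assms pi_gt_zero in auto)
next
  case False
  show ?thesis
  proof (rule per_mod_eq[where m=0])
    fix n :: int
    show "pi - \<bar>x\<bar> \<le> \<bar>x - pi - 2 * pi * of_int n\<bar>"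
    proof (cases "n = 0")
      case False
      then have "n \<le> -1 \<or> 1 \<le> n" by linarith
      then show ?thesis
      proof
        assume "n \<le> -1" then have "of_int n \<le> (-1::real)" by simp
        then have "2 * pi * of_int n \<le> 2 * pi * (-1)" using pi_gt_zero by (intro mult_left_mono) auto
        then show ?thesis using assms by linarith
      next
        assume "1 \<le> n" then have "1 \<le> (of_int n::real)" by simp
        then have "2 * pi * 1 \<le> 2 * pi * of_int n" using pi_gt_zero by (intro mult_left_mono) auto
        then show ?thesis using assms by linarith
      qed
    qed (use False assms in simp)
  qed (use False assms pi_gt_zero in auto)
qed

lemma dS2_ge1: "per_mod (fst a - fst b) pi \<le> dS2 a b"
  unfolding dS2_def using real_sqrt_ge_abs1[of "per_mod (fst a - fst b) pi" "per_mod (snd a - snd b) (2 * pi)"]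
  by (simp add: per_mod_nonneg)

lemma dS2_ge2: "per_mod (snd a - snd b) (2 * pi) \<le> dS2 a b"
  unfolding dS2_def using real_sqrt_ge_abs2[of "per_mod (fst a - fst b) pi" "per_mod (snd a - snd b) (2 * pi)"]
  by (simp add: per_mod_nonneg)

lemma dS2_nonneg: "0 \<le> dS2 a b" unfolding dS2_def by simp

lemma dS2_same_snd: "dS2 (x, t) (y, t) = per_mod (x - y) pi"
  unfolding dS2_def using per_mod_zero[of "2*pi"] per_mod_nonneg[of "x - y" pi] by simp

lemma dS2_same_fst: "dS2 (x, t) (x, u) = per_mod (t - u) (2 * pi)"
  unfolding dS2_def using per_mod_zero[of "pi"] per_mod_nonneg[of "t - u" "2*pi"] by simp

lemma dS2_le_dist: "dS2 a b \<le> dist a b"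
proof -
  have "(per_mod (fst a - fst b) pi)\<^sup>2 \<le> (dist (fst a) (fst b))\<^sup>2"
    unfolding dist_real_def using per_mod_le_abs[of pi "fst a - fst b"] by (intro power_mono) (simp_all add: per_mod_nonneg)
  moreover have "(per_mod (snd a - snd b) (2*pi))\<^sup>2 \<le> (dist (snd a) (snd b))\<^sup>2"
    unfolding dist_real_def using per_mod_le_abs[of "2*pi" "snd a - snd b"] by (intro power_mono) (simp_all add: per_mod_nonneg)
  ultimately show ?thesis unfolding dS2_def dist_prod_def by (intro real_sqrt_le_mono) simp
qed

lemma W_S2_iff: "x \<in> W_S2 \<longleftrightarrow> -pi/2 < fst x \<and> fst x < pi/2 \<and> -pi < snd x \<and> snd x \<le> pi"
  unfolding W_S2_def by (cases x) auto

lemma dist_equator: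
  assumes w: "w \<in> W_S2" shows "dist_to_set dS2 equator w = \<bar>fst w\<bar>"
  unfolding dist_to_set_def
proof (rule cInf_eq_minimum)
  have w': "(0, snd w) \<in> equator" using w unfolding equator_def W_S2_iff by auto
  have "dS2 w (0, snd w) = \<bar>fst w\<bar>"
    using dS2_same_snd[of "fst w" "snd w" 0] per_mod_pi_small[of "fst w"] w unfolding W_S2_iff
    by (cases w) auto
  then show "\<bar>fst w\<bar> \<in> dS2 w ` equator" using w' by force
next
  fix x assume "x \<in> dS2 w ` equator"
  then obtain a where a: "a \<in> equator" "x = dS2 w a" by auto
  then have "fst a = 0" unfolding equator_def by auto
  then show "\<bar>fst w\<bar> \<le> x" using dS2_ge1[of w a] per_mod_pi_small[of "fst w"] w a unfolding W_S2_iff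
    by auto
qed

definition Dm :: "real \<Rightarrow> real" where "Dm t = min \<bar>t\<bar> (pi - \<bar>t\<bar>)"

lemma dist_meridians:
  assumes w: "w \<in> W_S2" shows "dist_to_set dS2 meridians w = Dm (snd w)"
  unfolding dist_to_set_def
proof (rule cInf_eq_minimum)
  have w1: "(fst w, 0) \<in> meridians" "(fst w, pi) \<in> meridians"
    using w unfolding meridians_def W_S2_iff by auto
  have d1: "dS2 w (fst w, 0) = \<bar>snd w\<bar>"
    using dS2_same_fst[of "fst w" "snd w" 0] per_mod_2pi_small[of "snd w"] w unfolding W_S2_iff
    by (cases w) auto
  have d2: "dS2 w (fst w, pi) = pi - \<bar>snd w\<bar>"
    using dS2_same_fst[of "fst w" "snd w" pi] per_mod_2pi_shift[of "snd w"] w unfolding W_S2_iff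
    by (cases w) auto
  show "Dm (snd w) \<in> dS2 w ` meridians"
  proof (cases "\<bar>snd w\<bar> \<le> pi - \<bar>snd w\<bar>")
    case True then have "Dm (snd w) = dS2 w (fst w, 0)" unfolding Dm_def d1 by simp
    then show ?thesis using w1 by force
  next
    case False then have "Dm (snd w) = dS2 w (fst w, pi)" unfolding Dm_def d2 by simp
    then show ?thesis using w1 by force
  qed
next
  fix x assume "x \<in> dS2 w ` meridians"
  then obtain a where a: "a \<in> meridians" "x = dS2 w a" by auto
  then have "snd a = 0 \<or> snd a = pi" unfolding meridians_def by auto
  then show "Dm (snd w) \<le> x"
  proof
    assume "snd a = 0"
    then show ?thesis using dS2_ge2[of w a] per_mod_2pi_small[of "snd w"] w a unfolding W_S2_iff Dm_def
      by auto
  next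
    assume "snd a = pi"
    then show ?thesis using dS2_ge2[of w a] per_mod_2pi_shift[of "snd w"] w a unfolding W_S2_iff Dm_def
      by auto
  qed
qed


abbreviation "I_S2 \<equiv> {-pi/2<..<pi/2::real}"
abbreviation "J_S2 \<equiv> {-pi<..pi::real}"

lemma fst_borel[measurable]: "fst \<in> borel_measurable (borel :: (real \<times> real) measure)"
  by (intro borel_measurable_continuous_onI continuous_intros)
lemma snd_borel[measurable]: "snd \<in> borel_measurable (borel :: (real \<times> real) measure)"
  by (intro borel_measurable_continuous_onI continuous_intros)
lemma M_S2_meas: "f \<in> borel_measurable borel \<Longrightarrow> f \<in> borel_measurable M_S2"
  unfolding M_S2_def by (rule measurable_restrict_space1) simp
lemma fst_M_S2[measurable]: "fst \<in> borel_measurable M_S2" by (rule M_S2_meas) simp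
lemma snd_M_S2[measurable]: "snd \<in> borel_measurable M_S2" by (rule M_S2_meas) simp

lemma W_S2_times: "W_S2 = I_S2 \<times> J_S2" unfolding W_S2_def ..

lemma W_S2_sets[measurable]: "W_S2 \<in> sets (borel :: (real \<times> real) measure)"
proof -
  have "W_S2 = {x::real\<times>real. -pi/2 < fst x \<and> fst x < pi/2 \<and> -pi < snd x \<and> snd x \<le> pi}"
    unfolding W_S2_def by auto
  also have "\<dots> \<in> sets borel" by measurable
  finally show ?thesis .
qed

lemma space_M_S2[simp]: "space M_S2 = W_S2" unfolding M_S2_def by (simp add: space_restrict_space)
lemma sets_nu_S2[simp]: "sets nu_S2 = sets M_S2" unfolding nu_S2_def by simp
lemma space_nu_S2[simp]: "space nu_S2 = W_S2" unfolding nu_S2_def by simp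

lemma emeasure_W_S2: "emeasure (lborel :: (real\<times>real) measure) W_S2 = ennreal (2 * pi * pi)"
proof -
  have "emeasure (lborel \<Otimes>\<^sub>M lborel) (I_S2 \<times> J_S2) = emeasure lborel I_S2 * emeasure lborel J_S2"
    by (intro lborel.emeasure_pair_measure_Times) auto
  also have "\<dots> = ennreal pi * ennreal (2 * pi)" by simp
  also have "\<dots> = ennreal (2 * pi * pi)" by (simp add: ennreal_mult[symmetric] mult_ac)
  finally show ?thesis unfolding W_S2_times lborel_prod .
qed

lemma cos_nonneg_W: "x \<in> W_S2 \<Longrightarrow> 0 \<le> cos (fst x)"
  unfolding W_S2_def by (auto intro!: cos_ge_zero)

lemma meas_M_S2_iff:
  fixes u :: "real \<times> real \<Rightarrow> real"
  shows "u \<in> borel_measurable M_S2 \<longleftrightarrow> (\<lambda>x. indicator W_S2 x * u x) \<in> borel_measurable borel"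
  unfolding M_S2_def by (subst borel_measurable_restrict_space_iff) auto

lemma int_rep:
  fixes u :: "real \<times> real \<Rightarrow> real"
  assumes um: "u \<in> borel_measurable M_S2" and ub: "\<And>x. x \<in> W_S2 \<Longrightarrow> \<bar>u x\<bar> \<le> B"
  shows "integrable (lborel \<Otimes>\<^sub>M lborel) (\<lambda>x. indicator W_S2 x * (cos (fst x) / (4 * pi) * u x))"
    and "(\<integral>x. u x \<partial>nu_S2) = (\<integral>x. indicator W_S2 x * (cos (fst x) / (4 * pi) * u x) \<partial>(lborel \<Otimes>\<^sub>M lborel))"
proof -
  let ?c = "\<lambda>x::real\<times>real. cos (fst x) / (4 * pi)"
  have cm: "?c \<in> borel_measurable M_S2" by measurable
  have cum: "(\<lambda>x. ?c x * u x) \<in> borel_measurable M_S2" using um cm by measurable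
  then have cumb: "(\<lambda>x. indicator W_S2 x * (?c x * u x)) \<in> borel_measurable borel"
    unfolding meas_M_S2_iff by (simp add: mult_ac)
  show int: "integrable (lborel \<Otimes>\<^sub>M lborel) (\<lambda>x. indicator W_S2 x * (?c x * u x))"
  proof (rule integrableI_bounded_set[where A=W_S2 and B=B])
    show "W_S2 \<in> sets (lborel \<Otimes>\<^sub>M lborel)" unfolding lborel_prod by simp
    show "(\<lambda>x. indicator W_S2 x * (?c x * u x)) \<in> borel_measurable (lborel \<Otimes>\<^sub>M lborel)"
      unfolding lborel_prod using cumb by simp
    show "emeasure (lborel \<Otimes>\<^sub>M lborel) W_S2 < \<infinity>" unfolding lborel_prod emeasure_W_S2 by simp
    show "AE x in lborel \<Otimes>\<^sub>M lborel. x \<in> W_S2 \<longrightarrow> norm (indicator W_S2 x * (?c x * u x)) \<le> B"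
    proof (intro AE_I2 impI)
      fix x :: "real \<times> real" assume x: "x \<in> W_S2"
      have c1: "cos (fst x) \<le> 4 * pi" using cos_le_one[of "fst x"] pi_gt3 by linarith
      have "\<bar>?c x\<bar> \<le> 1" using cos_nonneg_W[OF x] c1 by (simp add: abs_le_iff divide_le_eq)
      then have "\<bar>?c x\<bar> * \<bar>u x\<bar> \<le> 1 * B" using ub[OF x] by (intro mult_mono) auto
      then show "norm (indicator W_S2 x * (?c x * u x)) \<le> B" using x by (simp add: abs_mult)
    qed
  qed (auto)
  have "(\<integral>x. u x \<partial>nu_S2) = (\<integral>x. ?c x * u x \<partial>M_S2)"
    unfolding nu_S2_def using um cm cos_nonneg_W by (subst integral_density) (auto intro!: AE_I2)
  also have "\<dots> = (\<integral>x. indicator W_S2 x * (?c x * u x) \<partial>lborel)"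
    unfolding M_S2_def by (subst integral_restrict_space) auto
  finally show "(\<integral>x. u x \<partial>nu_S2) = (\<integral>x. indicator W_S2 x * (?c x * u x) \<partial>(lborel \<Otimes>\<^sub>M lborel))"
    unfolding lborel_prod .
qed

lemma int_rep_fst:
  fixes u :: "real \<times> real \<Rightarrow> real"
  assumes um: "u \<in> borel_measurable M_S2" and ub: "\<And>x. x \<in> W_S2 \<Longrightarrow> \<bar>u x\<bar> \<le> B"
  shows "(\<integral>x. u x \<partial>nu_S2) = (\<integral>a. (indicator I_S2 a * cos a / (4 * pi)) * (\<integral>b. indicator J_S2 b * u (a, b) \<partial>lborel) \<partial>lborel)"
proof -
  note R = int_rep[OF um ub]
  have "(\<integral>x. u x \<partial>nu_S2) = (\<integral>a. \<integral>b. indicator W_S2 (a, b) * (cos a / (4 * pi) * u (a, b)) \<partial>lborel \<partial>lborel)"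
  proof -
    have I2: "(\<integral>a. \<integral>b. indicator W_S2 (a, b) * (cos a / (4 * pi) * u (a, b)) \<partial>lborel \<partial>lborel)
       = (\<integral>x. indicator W_S2 x * (cos (fst x) / (4 * pi) * u x) \<partial>(lborel \<Otimes>\<^sub>M lborel))"
      using lborel_pair.integral_fst'[OF R(1)] by (simp only: fst_conv)
    show ?thesis by (rule trans[OF R(2) I2[symmetric]])
  qed
  also have "\<dots> = (\<integral>a. (indicator I_S2 a * cos a / (4 * pi)) * (\<integral>b. indicator J_S2 b * u (a, b) \<partial>lborel) \<partial>lborel)"
  proof (intro Bochner_Integration.integral_cong refl)
    fix a :: real
    have "(\<lambda>b. indicator W_S2 (a, b) * (cos a / (4 * pi) * u (a, b))) = (\<lambda>b. (indicator I_S2 a * cos a / (4 * pi)) * (indicator J_S2 b * u (a, b)))"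
      unfolding W_S2_times indicator_times by (auto simp: mult_ac)
    then show "(\<integral>b. indicator W_S2 (a, b) * (cos a / (4 * pi) * u (a, b)) \<partial>lborel) = (indicator I_S2 a * cos a / (4 * pi)) * (\<integral>b. indicator J_S2 b * u (a, b) \<partial>lborel)"
      by simp
  qed
  finally show ?thesis .
qed

lemma int_rep_snd:
  fixes u :: "real \<times> real \<Rightarrow> real"
  assumes um: "u \<in> borel_measurable M_S2" and ub: "\<And>x. x \<in> W_S2 \<Longrightarrow> \<bar>u x\<bar> \<le> B"
  shows "(\<integral>x. u x \<partial>nu_S2) = (\<integral>b. indicator J_S2 b * ((\<integral>a. indicator I_S2 a * cos a * u (a, b) \<partial>lborel) / (4 * pi)) \<partial>lborel)"
proof -
  note R = int_rep[OF um ub]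
  let ?F = "\<lambda>a b. indicator W_S2 (a, b) * (cos a / (4 * pi) * u (a, b))"
  have e: "(\<lambda>x. indicator W_S2 x * (cos (fst x) / (4 * pi) * u x)) = case_prod ?F" by auto
  have "(\<integral>x. u x \<partial>nu_S2) = (\<integral>b. \<integral>a. ?F a b \<partial>lborel \<partial>lborel)"
  proof -
    have I2: "(\<integral>b. \<integral>a. ?F a b \<partial>lborel \<partial>lborel) = integral\<^sup>L (lborel \<Otimes>\<^sub>M lborel) (case_prod ?F)"
      by (rule lborel_pair.integral_snd) (rule R(1)[unfolded e])
    show ?thesis using trans[OF R(2)[unfolded e] I2[symmetric]] .
  qed
  also have "\<dots> = (\<integral>b. indicator J_S2 b * ((\<integral>a. indicator I_S2 a * cos a * u (a, b) \<partial>lborel) / (4 * pi)) \<partial>lborel)"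
  proof (intro Bochner_Integration.integral_cong refl)
    fix b :: real
    have "(\<lambda>a. ?F a b) = (\<lambda>a. (indicator J_S2 b / (4 * pi)) * (indicator I_S2 a * cos a * u (a, b)))"
      unfolding W_S2_times indicator_times by (auto simp: mult_ac)
    then show "(\<integral>a. ?F a b \<partial>lborel) = indicator J_S2 b * ((\<integral>a. indicator I_S2 a * cos a * u (a, b) \<partial>lborel) / (4 * pi))"
      by simp
  qed
  finally show ?thesis .
qed

lemma int_J: "(\<integral>b. indicator J_S2 b \<partial>lborel) = 2 * pi"
  by simp

lemma int_I_cos: "(\<integral>a. indicator I_S2 a * cos a \<partial>lborel) = 2"
proof -
  have "(LBINT x=-pi/2..pi/2. cos x) = sin (pi/2) - sin (-pi/2)"
    by (intro interval_integral_FTC_finite continuous_intros)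
       (auto intro!: derivative_eq_intros simp: has_real_derivative_iff_has_vector_derivative[symmetric])
  then show ?thesis
    by (simp add: interval_lebesgue_integral_def set_lebesgue_integral_def)
qed

lemma prob_nu_S2: "prob_space nu_S2"
proof -
  have "(\<integral>x. 1 \<partial>nu_S2) = (\<integral>a. (indicator I_S2 a * cos a / (4 * pi)) * (\<integral>b. indicator J_S2 b * 1 \<partial>lborel) \<partial>lborel)"
    by (rule int_rep_fst[where B=1]) auto
  also have "\<dots> = (\<integral>a. indicator I_S2 a * cos a / 2 \<partial>lborel)"
    by (intro Bochner_Integration.integral_cong refl) simp
  also have "\<dots> = 1" using int_I_cos by simp
  finally have m1: "measure nu_S2 (space nu_S2) = 1" by simp
  then have "emeasure nu_S2 (space nu_S2) \<noteq> \<infinity>" by (auto simp: measure_def)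
  then have "emeasure nu_S2 (space nu_S2) = 1" using m1 emeasure_eq_ennreal_measure by fastforce
  then show ?thesis by (rule prob_spaceI)
qed


lemma measurable_nu_S2_iff[simp]: "measurable nu_S2 N = measurable M_S2 N"
  by (rule measurable_cong_sets) auto

lemma box_sub_W: "0 < a \<Longrightarrow> a \<le> 1 \<Longrightarrow> {-a<..<a} \<times> {-a<..<a} \<subseteq> W_S2"
  unfolding W_S2_def using pi_gt3 by auto

lemma box_pos:
  assumes a: "0 < a" "a \<le> 1"
  shows "0 < measure nu_S2 ({-a<..<a} \<times> {-a<..<a})"
proof -
  let ?B = "{-a<..<a} \<times> {-a<..<a} :: (real \<times> real) set"
  have Bb: "?B \<in> sets borel" by (intro borel_Times) auto
  have BW: "?B \<subseteq> W_S2" using box_sub_W[OF a] .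
  have BM: "?B \<in> sets M_S2" unfolding M_S2_def using Bb BW
    by (subst sets_restrict_space_iff) auto
  have c1: "0 < cos (1::real)" using pi_gt3 by (intro cos_gt_zero) auto
  have "emeasure nu_S2 ?B = (\<integral>\<^sup>+x. ennreal (cos (fst x) / (4 * pi)) * indicator ?B x \<partial>M_S2)"
    unfolding nu_S2_def using BM by (intro emeasure_density) auto
  also have "\<dots> = (\<integral>\<^sup>+x. ennreal (cos (fst x) / (4 * pi)) * indicator ?B x * indicator W_S2 x \<partial>lborel)"
    unfolding M_S2_def by (subst nn_integral_restrict_space) auto
  also have "\<dots> \<ge> (\<integral>\<^sup>+x. ennreal (cos 1 / (4 * pi)) * indicator ?B x \<partial>lborel)"
  proof (intro nn_integral_mono)
    fix x :: "real \<times> real"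
    show "ennreal (cos 1 / (4 * pi)) * indicator ?B x \<le> ennreal (cos (fst x) / (4 * pi)) * indicator ?B x * indicator W_S2 x"
    proof (cases "x \<in> ?B")
      case True
      then have x: "\<bar>fst x\<bar> \<le> 1" using a by (cases x) auto
      have "cos 1 \<le> cos \<bar>fst x\<bar>" using x pi_gt3 by (intro cos_monotone_0_pi_le) auto
      then have "cos 1 \<le> cos (fst x)" by simp
      moreover have "x \<in> W_S2" using True BW by auto
      ultimately show ?thesis using True by (auto intro!: ennreal_leI divide_right_mono)
    qed simp
  qed
  finally have "ennreal (cos 1 / (4 * pi)) * emeasure lborel ?B \<le> emeasure nu_S2 ?B"
    using Bb by (simp add: nn_integral_cmult_indicator)
  moreover have "emeasure (lborel :: (real\<times>real) measure) ?B = ennreal (2 * a) * ennreal (2 * a)"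
  proof -
    have "emeasure (lborel \<Otimes>\<^sub>M lborel) ?B = emeasure lborel {-a<..<a} * emeasure lborel {-a<..<a}"
      by (intro lborel.emeasure_pair_measure_Times) auto
    then show ?thesis unfolding lborel_prod using a by simp
  qed
  ultimately have "ennreal (cos 1 / (4 * pi) * (2 * a) * (2 * a)) \<le> emeasure nu_S2 ?B"
    using a c1 by (simp add: ennreal_mult[symmetric] mult_ac)
  moreover have "0 < cos 1 / (4 * pi) * (2 * a) * (2 * a)" using a c1 by simp
  ultimately have "0 < emeasure nu_S2 ?B" by (meson ennreal_less_zero_iff less_le_trans)
  then show ?thesis using finite_measure.emeasure_eq_measure[OF prob_space.finite_measure[OF prob_nu_S2]] by simp
qed

lemma pos_from_box:
  fixes g :: "real \<times> real \<Rightarrow> real"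
  assumes gm: "g \<in> borel_measurable M_S2"
    and small: "\<And>a x. 0 < a \<Longrightarrow> x \<in> W_S2 \<Longrightarrow> \<bar>fst x\<bar> < a \<Longrightarrow> \<bar>snd x\<bar> < a \<Longrightarrow> g x \<le> a\<^sup>2"
    and e: "0 < e"
  shows "0 < measure nu_S2 {x \<in> space nu_S2. g x < e}"
proof -
  have pr: "Measurable.pred M_S2 (\<lambda>x. g x < e)" using gm by measurable
  interpret prob_space nu_S2 by (rule prob_nu_S2)
  define a where "a = min 1 (sqrt e / 2)"
  have a: "0 < a" "a \<le> 1" using e unfolding a_def by auto
  have a2: "a\<^sup>2 < e"
  proof -
    have "a \<le> sqrt e / 2" unfolding a_def by simp
    then have "a\<^sup>2 \<le> (sqrt e / 2)\<^sup>2" using a by (intro power_mono) auto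
    also have "\<dots> = e / 4" using e by (simp add: power_divide)
    finally show ?thesis using e by simp
  qed
  have sub: "{-a<..<a} \<times> {-a<..<a} \<subseteq> {x \<in> space nu_S2. g x < e}"
  proof
    fix x :: "real \<times> real" assume x: "x \<in> {-a<..<a} \<times> {-a<..<a}"
    then have xW: "x \<in> W_S2" using box_sub_W[OF a] by auto
    have "g x \<le> a\<^sup>2" using x by (intro small[OF a(1) xW]) (cases x; auto)+
    then show "x \<in> {x \<in> space nu_S2. g x < e}" using xW a2 by simp
  qed
  have "{x \<in> space nu_S2. g x < e} \<in> sets nu_S2" using pr by (simp add: pred_def)
  then have "measure nu_S2 ({-a<..<a} \<times> {-a<..<a}) \<le> measure nu_S2 {x \<in> space nu_S2. g x < e}"
    using sub by (intro finite_measure_mono) auto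
  then show ?thesis using box_pos[OF a] by linarith
qed


lemma conc1:
  fixes q H :: "real \<Rightarrow> real" and S :: "real set" and R s B c \<delta> \<epsilon> :: real
  assumes S: "S \<in> sets borel" and qm: "q \<in> borel_measurable borel" and Hm: "H \<in> borel_measurable borel"
    and q0: "\<And>t. t \<in> S \<Longrightarrow> 0 \<le> q t"
    and qi: "integrable lborel (\<lambda>t. indicator S t * q t)"
    and q1: "(\<integral>t. indicator S t * q t \<partial>lborel) = 1"
    and qg: "(\<integral>t. indicator S t * q t * (min \<bar>t\<bar> R)\<^sup>2 \<partial>lborel) \<le> s"
    and HB: "\<And>t. t \<in> S \<Longrightarrow> \<bar>H t\<bar> \<le> B" and cB: "\<bar>c\<bar> \<le> B"
    and Hc: "\<And>t. t \<in> S \<Longrightarrow> \<bar>t\<bar> < \<delta> \<Longrightarrow> \<bar>H t - c\<bar> \<le> \<epsilon>"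
    and \<delta>: "0 < \<delta>" and R: "0 < R" and \<epsilon>: "0 \<le> \<epsilon>"
  shows "\<bar>(\<integral>t. indicator S t * q t * H t \<partial>lborel) - c\<bar> \<le> \<epsilon> + 2 * B * s / (min \<delta> R)\<^sup>2"
proof -
  define m where "m = min \<delta> R"
  have m: "0 < m" unfolding m_def using \<delta> R by simp
  define b where "b t = \<epsilon> + 2 * B / m\<^sup>2 * (min \<bar>t\<bar> R)\<^sup>2" for t
  have B0: "0 \<le> B" using cB by simp
  have pw: "\<bar>H t - c\<bar> \<le> b t" if t: "t \<in> S" for t
  proof (cases "\<bar>t\<bar> < \<delta>")
    case True
    have "0 \<le> 2 * B / m\<^sup>2 * (min \<bar>t\<bar> R)\<^sup>2" using B0 by simp
    then show ?thesis using Hc[OF t True] unfolding b_def by linarith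
  next
    case False
    then have "m \<le> min \<bar>t\<bar> R" unfolding m_def by auto
    then have "m\<^sup>2 \<le> (min \<bar>t\<bar> R)\<^sup>2" using m by (intro power_mono) auto
    then have "1 \<le> (min \<bar>t\<bar> R)\<^sup>2 / m\<^sup>2" using m by simp
    then have "2 * B * 1 \<le> 2 * B * ((min \<bar>t\<bar> R)\<^sup>2 / m\<^sup>2)" using B0 by (intro mult_left_mono) auto
    moreover have "\<bar>H t - c\<bar> \<le> 2 * B" using HB[OF t] cB by linarith
    ultimately show ?thesis unfolding b_def using \<epsilon> by (simp add: field_simps)
  qed
  have ind_m: "(\<lambda>t. indicator S t :: real) \<in> borel_measurable borel" using S by measurable
  have qHi: "integrable lborel (\<lambda>t. indicator S t * q t * H t)"
  proof (rule Bochner_Integration.integrable_bound[where f="\<lambda>t. B * (indicator S t * q t)"])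
    show "integrable lborel (\<lambda>t. B * (indicator S t * q t))" using qi by simp
    show "(\<lambda>t. indicator S t * q t * H t) \<in> borel_measurable lborel" using ind_m qm Hm by simp
    show "AE t in lborel. norm (indicator S t * q t * H t) \<le> norm (B * (indicator S t * q t))"
    proof (intro AE_I2)
      fix t show "norm (indicator S t * q t * H t) \<le> norm (B * (indicator S t * q t))"
      proof (cases "t \<in> S")
        case True
        have "q t * \<bar>H t\<bar> \<le> q t * B" using HB[OF True] q0[OF True] by (intro mult_left_mono) auto
        then show ?thesis using True q0[OF True] B0 by (simp add: abs_mult mult.commute)
      qed simp
    qed
  qed
  have mm: "(\<lambda>t. (min \<bar>t\<bar> R)\<^sup>2) \<in> borel_measurable borel" by measurable
  have qgi: "integrable lborel (\<lambda>t. indicator S t * q t * (min \<bar>t\<bar> R)\<^sup>2)"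
  proof (rule Bochner_Integration.integrable_bound[where f="\<lambda>t. R\<^sup>2 * (indicator S t * q t)"])
    show "integrable lborel (\<lambda>t. R\<^sup>2 * (indicator S t * q t))" using qi by simp
    show "(\<lambda>t. indicator S t * q t * (min \<bar>t\<bar> R)\<^sup>2) \<in> borel_measurable lborel" using ind_m qm mm by simp
    show "AE t in lborel. norm (indicator S t * q t * (min \<bar>t\<bar> R)\<^sup>2) \<le> norm (R\<^sup>2 * (indicator S t * q t))"
    proof (intro AE_I2)
      fix t
      have "(min \<bar>t\<bar> R)\<^sup>2 \<le> R\<^sup>2" using R by (intro power_mono) auto
      then show "norm (indicator S t * q t * (min \<bar>t\<bar> R)\<^sup>2) \<le> norm (R\<^sup>2 * (indicator S t * q t))"
      proof (cases "t \<in> S")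
        case True
        have "q t * (min \<bar>t\<bar> R)\<^sup>2 \<le> q t * R\<^sup>2" using \<open>(min \<bar>t\<bar> R)\<^sup>2 \<le> R\<^sup>2\<close> q0[OF True] by (intro mult_left_mono) auto
        then show ?thesis using True q0[OF True] by (simp add: abs_mult mult.commute)
      qed simp
    qed
  qed
  have eq1: "(\<integral>t. indicator S t * q t * H t \<partial>lborel) - c = (\<integral>t. indicator S t * q t * (H t - c) \<partial>lborel)"
  proof -
    have "(\<integral>t. indicator S t * q t * (H t - c) \<partial>lborel) = (\<integral>t. indicator S t * q t * H t - c * (indicator S t * q t) \<partial>lborel)"
      by (simp add: algebra_simps)
    also have "\<dots> = (\<integral>t. indicator S t * q t * H t \<partial>lborel) - c * (\<integral>t. indicator S t * q t \<partial>lborel)"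
      using qHi qi by simp
    finally show ?thesis using q1 by simp
  qed
  have eqb: "(\<lambda>t. indicator S t * q t * b t) = (\<lambda>t. \<epsilon> * (indicator S t * q t) + 2 * B / m\<^sup>2 * (indicator S t * q t * (min \<bar>t\<bar> R)\<^sup>2))"
    by (auto simp: b_def algebra_simps fun_eq_iff)
  have bi: "integrable lborel (\<lambda>t. indicator S t * q t * b t)"
    unfolding eqb by (intro Bochner_Integration.integrable_add integrable_mult_right qi qgi)
  have bI: "(\<integral>t. indicator S t * q t * b t \<partial>lborel) = \<epsilon> + 2 * B / m\<^sup>2 * (\<integral>t. indicator S t * q t * (min \<bar>t\<bar> R)\<^sup>2 \<partial>lborel)"
  proof -
    have "(\<integral>t. indicator S t * q t * b t \<partial>lborel) = (\<integral>t. \<epsilon> * (indicator S t * q t) + 2 * B / m\<^sup>2 * (indicator S t * q t * (min \<bar>t\<bar> R)\<^sup>2) \<partial>lborel)"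
      unfolding b_def by (simp add: algebra_simps)
    also have "\<dots> = \<epsilon> * (\<integral>t. indicator S t * q t \<partial>lborel) + 2 * B / m\<^sup>2 * (\<integral>t. indicator S t * q t * (min \<bar>t\<bar> R)\<^sup>2 \<partial>lborel)"
      using qi qgi by simp
    finally show ?thesis using q1 by simp
  qed
  have bI2: "(\<integral>t. indicator S t * q t * b t \<partial>lborel) \<le> \<epsilon> + 2 * B * s / m\<^sup>2"
  proof -
    have "2 * B / m\<^sup>2 * (\<integral>t. indicator S t * q t * (min \<bar>t\<bar> R)\<^sup>2 \<partial>lborel) \<le> 2 * B / m\<^sup>2 * s"
      using qg B0 by (intro mult_left_mono) auto
    then show ?thesis unfolding bI by simp
  qed
  have diffi: "integrable lborel (\<lambda>t. indicator S t * q t * (H t - c))"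
    using qHi qi by (simp add: algebra_simps)
  have up: "(\<integral>t. indicator S t * q t * (H t - c) \<partial>lborel) \<le> (\<integral>t. indicator S t * q t * b t \<partial>lborel)"
  proof (rule integral_mono[OF diffi bi])
    fix t show "indicator S t * q t * (H t - c) \<le> indicator S t * q t * b t"
      using pw[of t] q0[of t] by (cases "t \<in> S") (auto intro!: mult_left_mono simp: abs_le_iff)
  qed
  have lo: "(\<integral>t. - (indicator S t * q t * (H t - c)) \<partial>lborel) \<le> (\<integral>t. indicator S t * q t * b t \<partial>lborel)"
  proof (rule integral_mono)
    show "integrable lborel (\<lambda>t. - (indicator S t * q t * (H t - c)))" using diffi by simp
    show "integrable lborel (\<lambda>t. indicator S t * q t * b t)" by (rule bi)
    fix t show "- (indicator S t * q t * (H t - c)) \<le> indicator S t * q t * b t"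
    proof (cases "t \<in> S")
      case True
      have "q t * (c - H t) \<le> q t * b t" using pw[OF True] q0[OF True] by (intro mult_left_mono) (auto simp: abs_le_iff)
      then show ?thesis using True by (simp add: algebra_simps)
    qed simp
  qed
  show ?thesis unfolding eq1 using up lo bI2 unfolding m_def by (simp add: abs_le_iff)
qed

lemma dct_cont:
  fixes u :: "real \<Rightarrow> real \<Rightarrow> real" and w :: "real \<Rightarrow> real" and T :: "real set"
  assumes um: "\<And>t. t \<in> T \<Longrightarrow> u t \<in> borel_measurable lborel"
    and wi: "integrable lborel w" and bd: "\<And>t y. t \<in> T \<Longrightarrow> \<bar>u t y\<bar> \<le> w y"
    and lim: "\<And>y e. 0 < e \<Longrightarrow> \<exists>d>0. \<forall>t\<in>T. \<bar>t - t0\<bar> < d \<longrightarrow> \<bar>u t y - u t0 y\<bar> < e"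
    and t0: "t0 \<in> T" and e: "0 < e"
  shows "\<exists>d>0. \<forall>t\<in>T. \<bar>t - t0\<bar> < d \<longrightarrow> \<bar>(\<integral>y. u t y \<partial>lborel) - (\<integral>y. u t0 y \<partial>lborel)\<bar> < e"
proof (rule ccontr)
  assume "\<not> ?thesis"
  then have "\<forall>n::nat. \<exists>t. t \<in> T \<and> \<bar>t - t0\<bar> < 1 / Suc n \<and> e \<le> \<bar>(\<integral>y. u t y \<partial>lborel) - (\<integral>y. u t0 y \<partial>lborel)\<bar>"
    by (metis not_less of_nat_0_less_iff zero_less_Suc zero_less_divide_1_iff)
  then obtain X where X: "\<And>n. X n \<in> T" "\<And>n. \<bar>X n - t0\<bar> < 1 / Suc n"
    "\<And>n. e \<le> \<bar>(\<integral>y. u (X n) y \<partial>lborel) - (\<integral>y. u t0 y \<partial>lborel)\<bar>"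
    by metis
  have conv: "(\<lambda>n. u (X n) y) \<longlonglongrightarrow> u t0 y" for y
  proof (rule LIMSEQ_I)
    fix r :: real assume r: "0 < r"
    obtain d where d: "0 < d" "\<And>t. t \<in> T \<Longrightarrow> \<bar>t - t0\<bar> < d \<Longrightarrow> \<bar>u t y - u t0 y\<bar> < r"
      using lim[OF r, of y] by blast
    obtain N where N: "inverse (real (Suc N)) < d" using reals_Archimedean[OF d(1)] by blast
    show "\<exists>no. \<forall>n\<ge>no. norm (u (X n) y - u t0 y) < r"
    proof (intro exI allI impI)
      fix n assume "N \<le> n"
      then have "1 / real (Suc n) \<le> 1 / real (Suc N)" by (intro divide_left_mono) auto
      then have "\<bar>X n - t0\<bar> < d" using X(2)[of n] N by (simp add: inverse_eq_divide)
      then show "norm (u (X n) y - u t0 y) < r" using d(2)[OF X(1)] by simp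
    qed
  qed
  have "(\<lambda>n. \<integral>y. u (X n) y \<partial>lborel) \<longlonglongrightarrow> (\<integral>y. u t0 y \<partial>lborel)"
  proof (rule integral_dominated_convergence[where w=w])
    show "u t0 \<in> borel_measurable lborel" using um[OF t0] .
    show "\<And>i. u (X i) \<in> borel_measurable lborel" using um X(1) by blast
    show "integrable lborel w" by fact
    show "AE x in lborel. (\<lambda>i. u (X i) x) \<longlonglongrightarrow> u t0 x" using conv by simp
    show "\<And>i. AE x in lborel. norm (u (X i) x) \<le> w x" using bd X(1) by simp
  qed
  from LIMSEQ_D[OF this e] obtain N where "\<And>n. N \<le> n \<Longrightarrow> norm ((\<integral>y. u (X n) y \<partial>lborel) - (\<integral>y. u t0 y \<partial>lborel)) < e"
    by blast
  from this[of N] X(3)[of N] show False by simp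
qed

lemma tendsto_at_right0_bound:
  fixes X :: "real \<Rightarrow> real"
  assumes H: "\<And>\<epsilon>. 0 < \<epsilon> \<Longrightarrow> \<exists>C. \<forall>\<sigma>>0. \<bar>X \<sigma> - c\<bar> \<le> \<epsilon> + C * \<sigma>\<^sup>2"
  shows "(X \<longlongrightarrow> c) (at_right 0)"
proof (rule tendstoI)
  fix e :: real assume e: "0 < e"
  obtain C where C: "\<And>\<sigma>. 0 < \<sigma> \<Longrightarrow> \<bar>X \<sigma> - c\<bar> \<le> e / 2 + C * \<sigma>\<^sup>2" using H[of "e/2"] e by auto
  define b where "b = sqrt (e / (2 * (\<bar>C\<bar> + 1)))"
  have b: "0 < b" unfolding b_def using e by simp
  show "eventually (\<lambda>\<sigma>. dist (X \<sigma>) c < e) (at_right 0)"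
    unfolding eventually_at_right_field
  proof (intro exI[of _ b] conjI allI impI b)
    fix \<sigma> :: real assume s: "0 < \<sigma>" "\<sigma> < b"
    have "\<sigma>\<^sup>2 < b\<^sup>2" using s by (intro power_strict_mono) auto
    also have "b\<^sup>2 = e / (2 * (\<bar>C\<bar> + 1))" unfolding b_def using e by simp
    finally have "(\<bar>C\<bar> + 1) * \<sigma>\<^sup>2 < (\<bar>C\<bar> + 1) * (e / (2 * (\<bar>C\<bar> + 1)))"
      by (intro mult_strict_left_mono) auto
    moreover have "(\<bar>C\<bar> + 1) * (e / (2 * (\<bar>C\<bar> + 1))) = e / 2"
    proof -
      have "\<bar>C\<bar> + 1 \<noteq> 0" by arith
      then show ?thesis by (simp add: field_simps)
    qed
    ultimately have "(\<bar>C\<bar> + 1) * \<sigma>\<^sup>2 < e / 2" by linarith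
    moreover have "C * \<sigma>\<^sup>2 \<le> (\<bar>C\<bar> + 1) * \<sigma>\<^sup>2" by (intro mult_right_mono) auto
    ultimately show "dist (X \<sigma>) c < e" using C[OF s(1)] by (simp add: dist_real_def)
  qed
qed

lemma lborel_shift:
  fixes h :: "real \<Rightarrow> real"
  assumes "h \<in> borel_measurable borel"
  shows "(\<integral>x. h x \<partial>lborel) = (\<integral>x. h (x + c) \<partial>lborel)"
proof -
  have "(\<integral>x. h x \<partial>lborel) = (\<integral>x. h x \<partial>distr lborel borel ((+) c))" by (simp add: lborel_distr_plus)
  also have "\<dots> = (\<integral>x. h (c + x) \<partial>lborel)" using assms by (subst integral_distr) auto
  finally show ?thesis by (simp add: add.commute)
qed


lemma metric_cont_imp_cont:
  assumes "metric_continuous dS2 W_S2 f" shows "continuous_on W_S2 f"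
  unfolding continuous_on_iff
proof (intro ballI allI impI)
  fix x e assume x: "x \<in> W_S2" and e: "(0::real) < e"
  obtain d where d: "0 < d" "\<And>y. y \<in> W_S2 \<Longrightarrow> dS2 x y < d \<Longrightarrow> \<bar>f y - f x\<bar> < e"
    using assms x e unfolding metric_continuous_def by blast
  show "\<exists>d>0. \<forall>x'\<in>W_S2. dist x' x < d \<longrightarrow> dist (f x') (f x) < e"
  proof (intro exI[of _ d] conjI ballI impI d(1))
    fix y assume y: "y \<in> W_S2" "dist y x < d"
    have "dS2 x y \<le> dist x y" by (rule dS2_le_dist)
    then show "dist (f y) (f x) < e" using d(2)[OF y(1)] y(2) by (simp add: dist_commute dist_real_def)
  qed
qed

lemma metric_cont_meas:
  fixes f :: "real \<times> real \<Rightarrow> real"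
  assumes "metric_continuous dS2 W_S2 f" shows "f \<in> borel_measurable M_S2"
proof -
  have "f \<in> borel_measurable (restrict_space borel W_S2)"
    by (rule borel_measurable_continuous_on_restrict[OF metric_cont_imp_cont[OF assms]])
  moreover have "sets (restrict_space borel W_S2) = sets M_S2"
    unfolding M_S2_def by (rule sets_restrict_space_cong) simp
  ultimately show ?thesis by (simp cong: measurable_cong_sets)
qed

lemma rep_eq:
  fixes u p :: "real \<times> real \<Rightarrow> real" and k :: "real \<Rightarrow> real"
  assumes um: "u \<in> borel_measurable M_S2" and ub: "\<And>x. x \<in> W_S2 \<Longrightarrow> \<bar>u x\<bar> \<le> Bu"
    and pm: "p \<in> borel_measurable M_S2" and pk: "\<And>x. x \<in> W_S2 \<Longrightarrow> p x = k (fst x)"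
    and k0: "\<And>t. 0 \<le> k t" and kb: "\<And>t. k t \<le> Kb"
  shows "(\<integral>x. u x \<partial>density nu_S2 (\<lambda>x. ennreal (p x))) =
    (\<integral>a. indicator I_S2 a * (cos a * k a / 2) * ((1 / (2 * pi)) * (\<integral>b. indicator J_S2 b * (indicator W_S2 (a, b) * u (a, b)) \<partial>lborel)) \<partial>lborel)"
proof -
  have p0: "x \<in> W_S2 \<Longrightarrow> 0 \<le> p x" for x using pk k0 by simp
  have "(\<integral>x. u x \<partial>density nu_S2 (\<lambda>x. ennreal (p x))) = (\<integral>x. p x * u x \<partial>nu_S2)"
    using pm um p0 by (subst integral_density) (auto intro!: AE_I2)
  also have "\<dots> = (\<integral>a. (indicator I_S2 a * cos a / (4 * pi)) * (\<integral>b. indicator J_S2 b * (p (a, b) * u (a, b)) \<partial>lborel) \<partial>lborel)"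
  proof (rule int_rep_fst[where B="Kb * Bu"])
    show "(\<lambda>x. p x * u x) \<in> borel_measurable M_S2" using pm um by measurable
    fix x assume x: "x \<in> W_S2"
    have "0 \<le> Kb" using k0[of 0] kb[of 0] by linarith
    then show "\<bar>p x * u x\<bar> \<le> Kb * Bu" unfolding abs_mult using pk[OF x] k0 kb ub[OF x]
      by (intro mult_mono) auto
  qed
  also have "\<dots> = (\<integral>a. indicator I_S2 a * (cos a * k a / 2) * ((1 / (2 * pi)) * (\<integral>b. indicator J_S2 b * (indicator W_S2 (a, b) * u (a, b)) \<partial>lborel)) \<partial>lborel)"
  proof (intro Bochner_Integration.integral_cong refl)
    fix a :: real
    show "(indicator I_S2 a * cos a / (4 * pi)) * (\<integral>b. indicator J_S2 b * (p (a, b) * u (a, b)) \<partial>lborel) =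
      indicator I_S2 a * (cos a * k a / 2) * ((1 / (2 * pi)) * (\<integral>b. indicator J_S2 b * (indicator W_S2 (a, b) * u (a, b)) \<partial>lborel))"
    proof (cases "a \<in> I_S2")
      case True
      have "(\<integral>b. indicator J_S2 b * (p (a, b) * u (a, b)) \<partial>lborel) = (\<integral>b. k a * (indicator J_S2 b * (indicator W_S2 (a, b) * u (a, b))) \<partial>lborel)"
      proof (intro Bochner_Integration.integral_cong refl)
        fix b show "indicator J_S2 b * (p (a, b) * u (a, b)) = k a * (indicator J_S2 b * (indicator W_S2 (a, b) * u (a, b)))"
        proof (cases "b \<in> J_S2")
          case True
          then have "(a, b) \<in> W_S2" using \<open>a \<in> I_S2\<close> unfolding W_S2_def by auto
          then show ?thesis using pk[of "(a, b)"] True by simp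
        qed simp
      qed
      then show ?thesis using True by simp
    qed simp
  qed
  finally show ?thesis .
qed


lemma fin_density_interval:
  fixes A :: "real set" and h :: "real \<Rightarrow> real"
  assumes A: "A \<in> sets borel" and Af: "emeasure lborel A < \<infinity>" and hb: "\<And>x. x \<in> A \<Longrightarrow> h x \<le> c"
    and hm: "h \<in> borel_measurable borel"
  shows "finite_measure (density (restrict_space lborel A) (\<lambda>x. ennreal (h x)))"
proof (rule finite_measureI)
  let ?M = "restrict_space lborel A"
  have "emeasure (density ?M (\<lambda>x. ennreal (h x))) (space ?M) = (\<integral>\<^sup>+x. ennreal (h x) * indicator (space ?M) x \<partial>?M)"
    using hm by (intro emeasure_density) (auto intro!: measurable_restrict_space1)
  also have "\<dots> \<le> (\<integral>\<^sup>+x. ennreal c \<partial>?M)"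
    using hb by (intro nn_integral_mono) (auto simp: space_restrict_space intro!: ennreal_leI)
  also have "\<dots> = ennreal c * emeasure ?M (space ?M)" by simp
  also have "emeasure ?M (space ?M) = emeasure lborel A"
    using A by (subst emeasure_restrict_space) (auto simp: space_restrict_space)
  finally have "emeasure (density ?M (\<lambda>x. ennreal (h x))) (space ?M) \<le> ennreal c * emeasure lborel A" .
  also have "\<dots> < \<infinity>" using Af by (simp add: ennreal_mult_less_top)
  finally show "emeasure (density ?M (\<lambda>x. ennreal (h x))) (space (density ?M (\<lambda>x. ennreal (h x)))) \<noteq> \<infinity>" by simp
qed

lemma id_meas_restrict: "(\<lambda>x. x) \<in> measurable (density (restrict_space lborel A) h) (borel :: real measure)"
proof -
  have "(\<lambda>x. x) \<in> measurable (restrict_space lborel A) (borel :: real measure)"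
    by (rule measurable_restrict_space1) simp
  then show ?thesis by simp
qed

lemma id_meas_count: "(\<lambda>x. x) \<in> measurable (count_space A) (borel :: real measure)"
  by simp

lemma id_meas_pair:
  assumes "(\<lambda>x. x) \<in> measurable A (borel :: real measure)" "(\<lambda>x. x) \<in> measurable B (borel :: real measure)"
  shows "(\<lambda>x. x) \<in> measurable (A \<Otimes>\<^sub>M B) (borel :: (real \<times> real) measure)"
proof -
  have "(\<lambda>x. x) \<in> measurable (A \<Otimes>\<^sub>M B) (borel \<Otimes>\<^sub>M borel)"
    unfolding measurable_pair_iff comp_def
    by (intro conjI measurable_compose[OF measurable_fst assms(1)] measurable_compose[OF measurable_snd assms(2)])
  then show ?thesis unfolding borel_prod .
qed

lemma id_meas_M_S2:
  assumes "(\<lambda>x. x) \<in> measurable M (borel :: (real \<times> real) measure)" "space M \<subseteq> W_S2"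
  shows "(\<lambda>x. x) \<in> measurable M M_S2"
  unfolding M_S2_def using assms by (intro measurable_restrict_space2) auto

lemma slice2_meas:
  fixes u :: "real \<times> real \<Rightarrow> real"
  assumes "u \<in> borel_measurable borel" shows "(\<lambda>b. u (a, b)) \<in> borel_measurable borel"
proof -
  have "(\<lambda>b::real. (a, b)) \<in> borel_measurable borel" by (intro borel_measurable_continuous_onI continuous_intros)
  from measurable_compose[OF this assms] show ?thesis .
qed

lemma slice1_meas:
  fixes u :: "real \<times> real \<Rightarrow> real"
  assumes "u \<in> borel_measurable borel" shows "(\<lambda>a. u (a, b)) \<in> borel_measurable borel"
proof -
  have "(\<lambda>a::real. (a, b)) \<in> borel_measurable borel" by (intro borel_measurable_continuous_onI continuous_intros)
  from measurable_compose[OF this assms] show ?thesis .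
qed

lemma post_eq_int:
  fixes u :: "real \<times> real \<Rightarrow> real"
  assumes um: "u \<in> borel_measurable borel" and ub: "\<And>x. \<bar>u x\<bar> \<le> B"
  shows "(\<integral>x. u x \<partial>post_equator) = (1 / (2 * pi)) * (\<integral>b. indicator J_S2 b * u (0, b) \<partial>lborel)"
proof -
  let ?D = "density (restrict_space lborel J_S2) (\<lambda>_. ennreal (1 / (2 * pi)))"
  let ?P = "count_space {0::real} \<Otimes>\<^sub>M ?D"
  have spP: "space ?P = {0} \<times> J_S2" by (simp add: space_pair_measure space_restrict_space)
  have idb: "(\<lambda>x. x) \<in> measurable ?P (borel :: (real \<times> real) measure)"
    by (intro id_meas_pair id_meas_count id_meas_restrict)
  have idm: "(\<lambda>x. x) \<in> measurable ?P M_S2"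
    using idb spP by (intro id_meas_M_S2) (auto simp: W_S2_def)
  have uM: "u \<in> borel_measurable M_S2" using um by (rule M_S2_meas)
  have "(\<integral>x. u x \<partial>post_equator) = (\<integral>x. u x \<partial>?P)"
    unfolding post_equator_def using idm uM by (subst integral_distr) auto
  also have "\<dots> = (\<integral>x. \<integral>y. u (x, y) \<partial>?D \<partial>count_space {0})"
  proof -
    have fD: "finite_measure ?D"
      by (rule fin_density_interval[where c="1 / (2 * pi)"]) auto
    interpret D: finite_measure ?D by (rule fD)
    interpret C: finite_measure "count_space {0::real}" by (rule finite_measure_count_space) simp
    interpret pair_sigma_finite "count_space {0::real}" ?D ..
    have fP: "finite_measure ?P" by (intro finite_measure_pair_measure fD C.finite_measure_axioms)
    have uP: "u \<in> borel_measurable ?P" using measurable_compose[OF idb um] .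
    have "integrable ?P u" using fP uP ub by (intro finite_measure.integrable_const_bound[where B=B]) auto
    from integral_fst'[OF this] show ?thesis by simp
  qed
  also have "\<dots> = (\<integral>y. u (0, y) \<partial>?D)" by (simp add: lebesgue_integral_count_space_finite)
  also have "\<dots> = (\<integral>y. (1 / (2 * pi)) *\<^sub>R u (0, y) \<partial>restrict_space lborel J_S2)"
    using slice2_meas[OF um, of 0] by (subst integral_density) (auto intro!: measurable_restrict_space1)
  also have "\<dots> = (\<integral>y. indicator J_S2 y *\<^sub>R ((1 / (2 * pi)) *\<^sub>R u (0, y)) \<partial>lborel)"
    by (subst integral_restrict_space) auto
  also have "\<dots> = (1 / (2 * pi)) * (\<integral>b. indicator J_S2 b * u (0, b) \<partial>lborel)"
    by (simp add: mult_ac)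
  finally show ?thesis .
qed

lemma post_mer_int:
  fixes u :: "real \<times> real \<Rightarrow> real"
  assumes um: "u \<in> borel_measurable borel" and ub: "\<And>x. \<bar>u x\<bar> \<le> B"
  shows "(\<integral>x. u x \<partial>post_meridians) =
    (1 / 4) * (\<integral>a. indicator I_S2 a * cos a * u (a, 0) \<partial>lborel) + (1 / 4) * (\<integral>a. indicator I_S2 a * cos a * u (a, pi) \<partial>lborel)"
proof -
  let ?D = "density (restrict_space lborel I_S2) (\<lambda>a. ennreal (cos a / 4))"
  let ?P = "?D \<Otimes>\<^sub>M count_space {0::real, pi}"
  have spP: "space ?P = I_S2 \<times> {0, pi}" by (simp add: space_pair_measure space_restrict_space)
  have idb: "(\<lambda>x. x) \<in> measurable ?P (borel :: (real \<times> real) measure)"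
    by (intro id_meas_pair id_meas_count id_meas_restrict)
  have idm: "(\<lambda>x. x) \<in> measurable ?P M_S2"
    using idb spP pi_gt_zero by (intro id_meas_M_S2) (auto simp: W_S2_def)
  have uM: "u \<in> borel_measurable M_S2" using um by (rule M_S2_meas)
  have "(\<integral>x. u x \<partial>post_meridians) = (\<integral>x. u x \<partial>?P)"
    unfolding post_meridians_def using idm uM by (subst integral_distr) auto
  also have "\<dots> = (\<integral>x. \<integral>y. u (x, y) \<partial>count_space {0, pi} \<partial>?D)"
  proof -
    have fD: "finite_measure ?D"
      by (rule fin_density_interval[where c="1 / 4"]) auto
    interpret D: finite_measure ?D by (rule fD)
    interpret C: finite_measure "count_space {0::real, pi}" by (rule finite_measure_count_space) simp
    interpret pair_sigma_finite ?D "count_space {0::real, pi}" ..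
    have fP: "finite_measure ?P" by (intro finite_measure_pair_measure fD C.finite_measure_axioms)
    have uP: "u \<in> borel_measurable ?P" using measurable_compose[OF idb um] .
    have "integrable ?P u" using fP uP ub by (intro finite_measure.integrable_const_bound[where B=B]) auto
    from integral_fst'[OF this] show ?thesis by simp
  qed
  also have "\<dots> = (\<integral>x. u (x, 0) + u (x, pi) \<partial>?D)"
    using pi_neq_zero by (simp add: lebesgue_integral_count_space_finite)
  also have "\<dots> = (\<integral>x. (cos x / 4) *\<^sub>R (u (x, 0) + u (x, pi)) \<partial>restrict_space lborel I_S2)"
  proof (subst integral_density)
    show "(\<lambda>x. u (x, 0) + u (x, pi)) \<in> borel_measurable (restrict_space lborel I_S2)"
      using slice1_meas[OF um, of 0] slice1_meas[OF um, of pi] by (intro measurable_restrict_space1) simp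
    show "AE x in restrict_space lborel I_S2. 0 \<le> cos x / 4"
      by (intro AE_I2) (auto simp: space_restrict_space intro!: cos_ge_zero)
    show "(\<lambda>a. cos a / 4) \<in> borel_measurable (restrict_space lborel I_S2)"
      by (intro measurable_restrict_space1) simp
  qed auto
  also have "\<dots> = (\<integral>x. indicator I_S2 x *\<^sub>R ((cos x / 4) *\<^sub>R (u (x, 0) + u (x, pi))) \<partial>lborel)"
    by (subst integral_restrict_space) auto
  also have "\<dots> = (\<integral>a. (1 / 4) * (indicator I_S2 a * cos a * u (a, 0)) + (1 / 4) * (indicator I_S2 a * cos a * u (a, pi)) \<partial>lborel)"
    by (simp add: algebra_simps)
  also have "\<dots> = (1 / 4) * (\<integral>a. indicator I_S2 a * cos a * u (a, 0) \<partial>lborel) + (1 / 4) * (\<integral>a. indicator I_S2 a * cos a * u (a, pi) \<partial>lborel)"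
  proof -
    have i: "integrable lborel (\<lambda>a. indicator I_S2 a * cos a * u (a, t))" for t
    proof (rule integrableI_bounded_set[where A=I_S2 and B=B])
      show "(\<lambda>a. indicator I_S2 a * cos a * u (a, t)) \<in> borel_measurable lborel"
        using slice1_meas[OF um, of t] by simp
      show "AE x in lborel. x \<in> I_S2 \<longrightarrow> norm (indicator I_S2 x * cos x * u (x, t)) \<le> B"
      proof (intro AE_I2 impI)
        fix x :: real assume "x \<in> I_S2"
        have "\<bar>cos x\<bar> * \<bar>u (x, t)\<bar> \<le> 1 * B" using ub[of "(x, t)"] by (intro mult_mono) auto
        then show "norm (indicator I_S2 x * cos x * u (x, t)) \<le> B" using \<open>x \<in> I_S2\<close> by (simp add: abs_mult)
      qed
    qed auto
    show ?thesis using i[of 0] i[of pi] by simp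
  qed
  finally show ?thesis .
qed


lemma trunc_eq_W: "x \<in> W_S2 \<Longrightarrow> (trunc_dist dS2 R equator x)\<^sup>2 = (min \<bar>fst x\<bar> R)\<^sup>2"
  unfolding trunc_dist_def using dist_equator by simp

lemma trunc_mer_W: "x \<in> W_S2 \<Longrightarrow> (trunc_dist dS2 R meridians x)\<^sup>2 = (min (Dm (snd x)) R)\<^sup>2"
  unfolding trunc_dist_def using dist_meridians by simp

lemma trunc_eq_meas: "(\<lambda>x. (trunc_dist dS2 R equator x)\<^sup>2) \<in> borel_measurable M_S2"
proof -
  have "(\<lambda>x. (min \<bar>fst x\<bar> R)\<^sup>2) \<in> borel_measurable M_S2" by measurable
  then show ?thesis using trunc_eq_W by (subst measurable_cong[where g="\<lambda>x. (min \<bar>fst x\<bar> R)\<^sup>2"]) auto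
qed

lemma Dm_meas[measurable]: "Dm \<in> borel_measurable borel"
  unfolding Dm_def[abs_def] by measurable

lemma trunc_mer_meas: "(\<lambda>x. (trunc_dist dS2 R meridians x)\<^sup>2) \<in> borel_measurable M_S2"
proof -
  have "(\<lambda>x. (min (Dm (snd x)) R)\<^sup>2) \<in> borel_measurable M_S2" by measurable
  then show ?thesis using trunc_mer_W by (subst measurable_cong[where g="\<lambda>x. (min (Dm (snd x)) R)\<^sup>2"]) auto
qed

lemma feas_int_le:
  fixes g :: "real \<times> real \<Rightarrow> real"
  assumes F: "maxent_feasible nu_S2 dS2 R A \<sigma> \<mu>"
    and gdef: "g = (\<lambda>x. (trunc_dist dS2 R A x)\<^sup>2)"
    and gm: "g \<in> borel_measurable M_S2" and gb: "\<And>x. x \<in> W_S2 \<Longrightarrow> 0 \<le> g x \<and> g x \<le> K"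
  shows "(\<integral>x. g x \<partial>\<mu>) \<le> \<sigma>\<^sup>2"
proof -
  have S: "sets \<mu> = sets M_S2" and P: "prob_space \<mu>"
    and C: "(\<integral>\<^sup>+x. ennreal (g x) \<partial>\<mu>) \<le> ennreal (\<sigma>\<^sup>2)"
    using F unfolding maxent_feasible_def gdef by auto
  interpret prob_space \<mu> by fact
  have sp: "space \<mu> = W_S2" using sets_eq_imp_space_eq[OF S] by simp
  have gm': "g \<in> borel_measurable \<mu>" using gm S by (simp cong: measurable_cong_sets)
  have gi: "integrable \<mu> g" using gm' gb sp by (intro integrable_const_bound[where B=K]) (auto intro!: AE_I2)
  have "ennreal (\<integral>x. g x \<partial>\<mu>) = (\<integral>\<^sup>+x. ennreal (g x) \<partial>\<mu>)"
    using gi gb sp by (intro nn_integral_eq_integral[symmetric]) (auto intro!: AE_I2)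
  with C have "ennreal (\<integral>x. g x \<partial>\<mu>) \<le> ennreal (\<sigma>\<^sup>2)" by simp
  then show ?thesis by (auto simp add: ennreal_le_iff2)
qed

lemma feas_prob:
  assumes F: "maxent_feasible nu_S2 dS2 R A \<sigma> \<mu>" shows "(\<integral>x. 1 \<partial>\<mu>) = (1::real)"
proof -
  have "prob_space \<mu>" using F unfolding maxent_feasible_def by auto
  then show ?thesis using prob_space.prob_space[of \<mu>] by (simp add: lebesgue_integral_const)
qed

lemma equator_weak:
  fixes R :: real and M :: "real \<Rightarrow> (real \<times> real) measure"
  assumes R: "0 < R"
  assumes fam: "\<And>\<sigma>. 0 < \<sigma> \<Longrightarrow> \<exists>l Z. 0 \<le> l \<and> 0 < Z \<and>
      M \<sigma> = density nu_S2 (\<lambda>x. ennreal (exp (- l * (trunc_dist dS2 R equator x)\<^sup>2) / Z)) \<and>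
      maxent_feasible nu_S2 dS2 R equator \<sigma> (M \<sigma>)"
  shows "weak_conv_metric dS2 W_S2 M post_equator (at_right 0)"
  unfolding weak_conv_metric_def
proof (intro allI impI, elim conjE exE)
  fix f :: "real \<times> real \<Rightarrow> real" and B
  assume fb: "\<forall>x\<in>W_S2. \<bar>f x\<bar> \<le> B" and fc: "metric_continuous dS2 W_S2 f"
  have B0: "0 \<le> B" using fb[rule_format, of "(0,0)"] unfolding W_S2_def by auto
  have fm: "f \<in> borel_measurable M_S2" by (rule metric_cont_meas[OF fc])
  define fW where "fW x = indicator W_S2 x * f x" for x
  have fWm: "fW \<in> borel_measurable borel" using fm unfolding meas_M_S2_iff fW_def[abs_def] .
  have fWb: "\<bar>fW x\<bar> \<le> B" for x using fb B0 unfolding fW_def by (cases "x \<in> W_S2") auto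
  define F where "F a = (1 / (2 * pi)) * (\<integral>b. indicator J_S2 b * (indicator W_S2 (a, b) * f (a, b)) \<partial>lborel)" for a
  have Fw: "F a = (1 / (2 * pi)) * (\<integral>b. indicator J_S2 b * fW (a, b) \<partial>lborel)" for a
    unfolding F_def fW_def ..
  have target: "(\<integral>x. f x \<partial>post_equator) = F 0"
  proof -
    have "(\<integral>x. f x \<partial>post_equator) = (\<integral>x. fW x \<partial>post_equator)"
      by (intro Bochner_Integration.integral_cong refl) (simp add: post_equator_def fW_def)
    also have "\<dots> = F 0" unfolding Fw by (rule post_eq_int[OF fWm fWb])
    finally show ?thesis .
  qed
  have hi: "integrable lborel (\<lambda>b. indicator J_S2 b * fW (a, b))" for a
  proof (rule integrableI_bounded_set[where A=J_S2 and B=B])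
    show "(\<lambda>b. indicator J_S2 b * fW (a, b)) \<in> borel_measurable lborel"
      using slice2_meas[OF fWm, of a] by simp
    show "AE x in lborel. x \<in> J_S2 \<longrightarrow> norm (indicator J_S2 x * fW (a, x)) \<le> B"
      using fWb by (intro AE_I2) simp
  qed auto
  have wi: "integrable lborel (\<lambda>b. B * indicator J_S2 b)"
    by (intro integrable_mult_right integrable_real_indicator) auto
  have FB: "\<bar>F a\<bar> \<le> B" for a
  proof -
    have "\<bar>\<integral>b. indicator J_S2 b * fW (a, b) \<partial>lborel\<bar> \<le> (\<integral>b. B * indicator J_S2 b \<partial>lborel)"
      using hi wi fWb by (intro integral_abs_bound_integral) (auto simp: abs_mult indicator_def)
    also have "\<dots> = B * (2 * pi)" by simp
    finally show ?thesis unfolding Fw by (simp add: abs_mult field_simps)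
  qed
  have Fm: "F \<in> borel_measurable borel"
  proof -
    have "(\<lambda>x. indicator J_S2 (snd x) * fW x) \<in> borel_measurable (lborel \<Otimes>\<^sub>M lborel :: (real \<times> real) measure)"
      unfolding lborel_prod using fWm by simp
    then have "case_prod (\<lambda>a b. indicator J_S2 b * fW (a, b)) \<in> borel_measurable (lborel \<Otimes>\<^sub>M lborel)"
      by (simp add: case_prod_beta')
    from lborel.borel_measurable_lebesgue_integral[OF this]
    have "(\<lambda>a. \<integral>b. indicator J_S2 b * fW (a, b) \<partial>lborel) \<in> borel_measurable lborel" .
    then show ?thesis unfolding Fw[abs_def] by simp
  qed
  have Fcont: "\<exists>d>0. \<forall>t\<in>I_S2. \<bar>t\<bar> < d \<longrightarrow> \<bar>F t - F 0\<bar> \<le> e" if e: "0 < e" for e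
  proof -
    have "\<exists>d>0. \<forall>t\<in>I_S2. \<bar>t - 0\<bar> < d \<longrightarrow>
        \<bar>(\<integral>b. indicator J_S2 b * fW (t, b) \<partial>lborel) - (\<integral>b. indicator J_S2 b * fW (0, b) \<partial>lborel)\<bar> < e"
    proof (rule dct_cont[where w="\<lambda>b. B * indicator J_S2 b"])
      show "(\<lambda>b. indicator J_S2 b * fW (t, b)) \<in> borel_measurable lborel" for t
        using slice2_meas[OF fWm, of t] by simp
      show "integrable lborel (\<lambda>b. B * indicator J_S2 b)" by (rule wi)
      show "\<bar>indicator J_S2 y * fW (t, y)\<bar> \<le> B * indicator J_S2 y" for t y
        using fWb by (auto simp: abs_mult indicator_def)
      show "(0::real) \<in> I_S2" by simp
      show "0 < e" by fact
      fix y :: real and e' :: real assume e': "0 < e'"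
      show "\<exists>d>0. \<forall>t\<in>I_S2. \<bar>t - 0\<bar> < d \<longrightarrow> \<bar>indicator J_S2 y * fW (t, y) - indicator J_S2 y * fW (0, y)\<bar> < e'"
      proof (cases "y \<in> J_S2")
        case False then show ?thesis using e' by (intro exI[of _ 1]) auto
      next
        case True
        then have yW: "(0, y) \<in> W_S2" unfolding W_S2_def by auto
        obtain d where d: "0 < d" "\<And>z. z \<in> W_S2 \<Longrightarrow> dS2 (0, y) z < d \<Longrightarrow> \<bar>f z - f (0, y)\<bar> < e'"
          using fc yW e' unfolding metric_continuous_def by blast
        show ?thesis
        proof (intro exI[of _ d] conjI ballI impI d(1))
          fix t assume t: "t \<in> I_S2" "\<bar>t - 0\<bar> < d"
          have tW: "(t, y) \<in> W_S2" using t True unfolding W_S2_def by auto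
          have "dS2 (0, y) (t, y) \<le> \<bar>t\<bar>"
            unfolding dS2_same_snd using per_mod_le_abs[of pi "0 - t"] by simp
          then have "\<bar>f (t, y) - f (0, y)\<bar> < e'" using d(2)[OF tW] t by simp
          then show "\<bar>indicator J_S2 y * fW (t, y) - indicator J_S2 y * fW (0, y)\<bar> < e'"
            using True tW yW unfolding fW_def by simp
        qed
      qed
    qed
    then obtain d where d: "0 < d" "\<And>t. t \<in> I_S2 \<Longrightarrow> \<bar>t\<bar> < d \<Longrightarrow>
        \<bar>(\<integral>b. indicator J_S2 b * fW (t, b) \<partial>lborel) - (\<integral>b. indicator J_S2 b * fW (0, b) \<partial>lborel)\<bar> < e"
      by auto
    show ?thesis
    proof (intro exI[of _ d] conjI ballI impI d(1))
      fix t assume t: "t \<in> I_S2" "\<bar>t\<bar> < d"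
      have "F t - F 0 = (1 / (2 * pi)) * ((\<integral>b. indicator J_S2 b * fW (t, b) \<partial>lborel) - (\<integral>b. indicator J_S2 b * fW (0, b) \<partial>lborel))"
        unfolding Fw by (simp only: right_diff_distrib)
      then have "\<bar>F t - F 0\<bar> = (1 / (2 * pi)) * \<bar>(\<integral>b. indicator J_S2 b * fW (t, b) \<partial>lborel) - (\<integral>b. indicator J_S2 b * fW (0, b) \<partial>lborel)\<bar>"
        by (simp only: abs_mult) simp
      also have "\<dots> \<le> 1 * e" using d(2)[OF t] pi_gt3 by (intro mult_mono) auto
      finally show "\<bar>F t - F 0\<bar> \<le> e" by simp
    qed
  qed
  show "((\<lambda>s. \<integral>x. f x \<partial>M s) \<longlongrightarrow> (\<integral>x. f x \<partial>post_equator)) (at_right 0)"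
    unfolding target
  proof (rule tendsto_at_right0_bound)
    fix \<epsilon> :: real assume \<epsilon>: "0 < \<epsilon>"
    obtain \<delta> where \<delta>: "0 < \<delta>" "\<And>t. t \<in> I_S2 \<Longrightarrow> \<bar>t\<bar> < \<delta> \<Longrightarrow> \<bar>F t - F 0\<bar> \<le> \<epsilon>"
      using Fcont[OF \<epsilon>] by blast
    show "\<exists>C. \<forall>\<sigma>>0. \<bar>(\<integral>x. f x \<partial>M \<sigma>) - F 0\<bar> \<le> \<epsilon> + C * \<sigma>\<^sup>2"
    proof (intro exI[of _ "2 * B / (min \<delta> R)\<^sup>2"] allI impI)
      fix \<sigma> :: real assume \<sigma>: "0 < \<sigma>"
      obtain l Z where l: "0 \<le> l" and Z: "0 < Z"
        and Mdef: "M \<sigma> = density nu_S2 (\<lambda>x. ennreal (exp (- l * (trunc_dist dS2 R equator x)\<^sup>2) / Z))"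
        and feas: "maxent_feasible nu_S2 dS2 R equator \<sigma> (M \<sigma>)"
        using fam[OF \<sigma>] by blast
      define k where "k a = exp (- l * (min \<bar>a\<bar> R)\<^sup>2) / Z" for a
      define q where "q a = cos a * k a / 2" for a
      let ?p = "\<lambda>x. exp (- l * (trunc_dist dS2 R equator x)\<^sup>2) / Z"
      have pm: "?p \<in> borel_measurable M_S2" using trunc_eq_meas by measurable
      have pk: "?p x = k (fst x)" if "x \<in> W_S2" for x unfolding k_def using trunc_eq_W[OF that] by simp
      have k0: "0 \<le> k a" for a unfolding k_def using Z by simp
      have kb: "k a \<le> 1 / Z" for a unfolding k_def using Z l by (simp add: divide_right_mono)
      note rep = rep_eq[OF _ _ pm pk k0 kb, folded Mdef]
      have km: "k \<in> borel_measurable borel" unfolding k_def[abs_def] by measurable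
      have qm: "q \<in> borel_measurable borel" unfolding q_def[abs_def] using km by measurable
      have q0: "0 \<le> q a" if "a \<in> I_S2" for a
      proof -
        have "0 \<le> cos a" using that by (auto intro!: cos_ge_zero)
        then show ?thesis unfolding q_def using k0[of a] by simp
      qed
      have qi: "integrable lborel (\<lambda>t. indicator I_S2 t * q t)"
      proof (rule integrableI_bounded_set[where A=I_S2 and B="1 / Z"])
        show "(\<lambda>t. indicator I_S2 t * q t) \<in> borel_measurable lborel" using qm by simp
        show "AE x in lborel. x \<in> I_S2 \<longrightarrow> norm (indicator I_S2 x * q x) \<le> 1 / Z"
        proof (intro AE_I2 impI)
          fix x :: real assume x: "x \<in> I_S2"
          have "cos x * k x \<le> 1 * (1 / Z)" using kb[of x] k0[of x] q0[OF x] cos_le_one[of x]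
            by (intro mult_mono) (auto intro!: cos_ge_zero simp: x)
          then show "norm (indicator I_S2 x * q x) \<le> 1 / Z" using x q0[OF x] unfolding q_def by simp
        qed
      qed auto
      have inner_const: "(1 / (2 * pi)) * (\<integral>b. indicator J_S2 b * (indicator W_S2 (a, b) * c) \<partial>lborel) = c"
        if a: "a \<in> I_S2" for a c
      proof -
        have "(\<integral>b. indicator J_S2 b * (indicator W_S2 (a, b) * c) \<partial>lborel) = (\<integral>b. c * indicator J_S2 b \<partial>lborel)"
          using a by (intro Bochner_Integration.integral_cong refl) (auto simp: W_S2_def indicator_def)
        then show ?thesis by simp
      qed
      have q1: "(\<integral>t. indicator I_S2 t * q t \<partial>lborel) = 1"
      proof -
        have "(\<integral>x. 1 \<partial>M \<sigma>) = (\<integral>a. indicator I_S2 a * q a * ((1 / (2 * pi)) * (\<integral>b. indicator J_S2 b * (indicator W_S2 (a, b) * 1) \<partial>lborel)) \<partial>lborel)"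
          unfolding q_def by (rule rep) auto
        also have "\<dots> = (\<integral>t. indicator I_S2 t * q t \<partial>lborel)"
        proof (intro Bochner_Integration.integral_cong refl)
          fix a show "indicator I_S2 a * q a * ((1 / (2 * pi)) * (\<integral>b. indicator J_S2 b * (indicator W_S2 (a, b) * 1) \<partial>lborel)) = indicator I_S2 a * q a"
          proof (cases "a \<in> I_S2")
            case True show ?thesis using inner_const[OF True, of 1] by simp
          qed simp
        qed
        finally show ?thesis using feas_prob[OF feas] by simp
      qed
      let ?g = "\<lambda>x. (trunc_dist dS2 R equator x)\<^sup>2"
      have gb: "0 \<le> ?g x \<and> ?g x \<le> R\<^sup>2" if "x \<in> W_S2" for x
        unfolding trunc_eq_W[OF that] using R by (auto intro!: power_mono)
      have qg: "(\<integral>t. indicator I_S2 t * q t * (min \<bar>t\<bar> R)\<^sup>2 \<partial>lborel) \<le> \<sigma>\<^sup>2"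
      proof -
        have "(\<integral>x. ?g x \<partial>M \<sigma>) = (\<integral>a. indicator I_S2 a * q a * ((1 / (2 * pi)) * (\<integral>b. indicator J_S2 b * (indicator W_S2 (a, b) * ?g (a, b)) \<partial>lborel)) \<partial>lborel)"
          unfolding q_def by (rule rep[where Bu="R\<^sup>2"]) (use trunc_eq_meas gb in auto)
        also have "\<dots> = (\<integral>t. indicator I_S2 t * q t * (min \<bar>t\<bar> R)\<^sup>2 \<partial>lborel)"
        proof (intro Bochner_Integration.integral_cong refl)
          fix a show "indicator I_S2 a * q a * ((1 / (2 * pi)) * (\<integral>b. indicator J_S2 b * (indicator W_S2 (a, b) * ?g (a, b)) \<partial>lborel))
              = indicator I_S2 a * q a * (min \<bar>a\<bar> R)\<^sup>2"
          proof (cases "a \<in> I_S2")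
            case True
            have "(\<integral>b. indicator J_S2 b * (indicator W_S2 (a, b) * ?g (a, b)) \<partial>lborel)
                = (\<integral>b. indicator J_S2 b * (indicator W_S2 (a, b) * (min \<bar>a\<bar> R)\<^sup>2) \<partial>lborel)"
              by (intro Bochner_Integration.integral_cong refl) (auto simp: indicator_def trunc_eq_W)
            then show ?thesis using inner_const[OF True, of "(min \<bar>a\<bar> R)\<^sup>2"] by simp
          qed simp
        qed
        finally show ?thesis using feas_int_le[OF feas refl trunc_eq_meas gb] by simp
      qed
      have repf: "(\<integral>x. f x \<partial>M \<sigma>) = (\<integral>t. indicator I_S2 t * q t * F t \<partial>lborel)"
        unfolding q_def F_def using fm fb by (intro rep[where Bu=B]) auto
      have "\<bar>(\<integral>t. indicator I_S2 t * q t * F t \<partial>lborel) - F 0\<bar> \<le> \<epsilon> + 2 * B * \<sigma>\<^sup>2 / (min \<delta> R)\<^sup>2"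
        by (rule conc1[OF _ qm Fm q0 qi q1 qg FB FB \<delta>(2) \<delta>(1) R]) (use \<epsilon> in auto)
      then show "\<bar>(\<integral>x. f x \<partial>M \<sigma>) - F 0\<bar> \<le> \<epsilon> + 2 * B / (min \<delta> R)\<^sup>2 * \<sigma>\<^sup>2"
        unfolding repf by (simp add: field_simps)
    qed
  qed
qed


lemma rep_mer:
  fixes u p :: "real \<times> real \<Rightarrow> real" and k :: "real \<Rightarrow> real"
  assumes um: "u \<in> borel_measurable M_S2" and ub: "\<And>x. x \<in> W_S2 \<Longrightarrow> \<bar>u x\<bar> \<le> Bu"
    and pm: "p \<in> borel_measurable M_S2" and pk: "\<And>x. x \<in> W_S2 \<Longrightarrow> p x = k (snd x)"
    and k0: "\<And>t. 0 \<le> k t" and kb: "\<And>t. k t \<le> Kb"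
  shows "(\<integral>x. u x \<partial>density nu_S2 (\<lambda>x. ennreal (p x))) =
    (\<integral>b. indicator J_S2 b * (k b / pi * ((1 / 4) * (\<integral>a. indicator I_S2 a * cos a * (indicator W_S2 (a, b) * u (a, b)) \<partial>lborel))) \<partial>lborel)"
proof -
  have p0: "x \<in> W_S2 \<Longrightarrow> 0 \<le> p x" for x using pk k0 by simp
  have "(\<integral>x. u x \<partial>density nu_S2 (\<lambda>x. ennreal (p x))) = (\<integral>x. p x * u x \<partial>nu_S2)"
    using pm um p0 by (subst integral_density) (auto intro!: AE_I2)
  also have "\<dots> = (\<integral>b. indicator J_S2 b * ((\<integral>a. indicator I_S2 a * cos a * (p (a, b) * u (a, b)) \<partial>lborel) / (4 * pi)) \<partial>lborel)"
  proof (rule int_rep_snd[where B="Kb * Bu"])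
    show "(\<lambda>x. p x * u x) \<in> borel_measurable M_S2" using pm um by measurable
    fix x assume x: "x \<in> W_S2"
    have "0 \<le> Kb" using k0[of 0] kb[of 0] by linarith
    then show "\<bar>p x * u x\<bar> \<le> Kb * Bu" unfolding abs_mult using pk[OF x] k0 kb ub[OF x]
      by (intro mult_mono) auto
  qed
  also have "\<dots> = (\<integral>b. indicator J_S2 b * (k b / pi * ((1 / 4) * (\<integral>a. indicator I_S2 a * cos a * (indicator W_S2 (a, b) * u (a, b)) \<partial>lborel))) \<partial>lborel)"
  proof (intro Bochner_Integration.integral_cong refl)
    fix b :: real
    show "indicator J_S2 b * ((\<integral>a. indicator I_S2 a * cos a * (p (a, b) * u (a, b)) \<partial>lborel) / (4 * pi)) =
      indicator J_S2 b * (k b / pi * ((1 / 4) * (\<integral>a. indicator I_S2 a * cos a * (indicator W_S2 (a, b) * u (a, b)) \<partial>lborel)))"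
    proof (cases "b \<in> J_S2")
      case True
      have "(\<integral>a. indicator I_S2 a * cos a * (p (a, b) * u (a, b)) \<partial>lborel) = (\<integral>a. k b * (indicator I_S2 a * cos a * (indicator W_S2 (a, b) * u (a, b))) \<partial>lborel)"
      proof (intro Bochner_Integration.integral_cong refl)
        fix a show "indicator I_S2 a * cos a * (p (a, b) * u (a, b)) = k b * (indicator I_S2 a * cos a * (indicator W_S2 (a, b) * u (a, b)))"
        proof (cases "a \<in> I_S2")
          case True
          then have "(a, b) \<in> W_S2" using \<open>b \<in> J_S2\<close> unfolding W_S2_def by auto
          then show ?thesis using pk[of "(a, b)"] True by simp
        qed simp
      qed
      then show ?thesis using True by simp
    qed simp
  qed
  finally show ?thesis .
qed

definition sh :: "real \<Rightarrow> real" where "sh b = (if b \<le> 0 then b + pi else b - pi)"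

lemma sh_meas[measurable]: "sh \<in> borel_measurable borel"
  unfolding sh_def[abs_def] by measurable

abbreviation "S_S2 \<equiv> {-pi/2<..pi/2::real}"

lemma bint:
  fixes h :: "real \<Rightarrow> real"
  assumes hm: "h \<in> borel_measurable borel" and hb: "\<And>x. x \<in> A \<Longrightarrow> \<bar>h x\<bar> \<le> C"
    and A: "A \<in> sets borel" "emeasure lborel A < \<infinity>"
  shows "integrable lborel (\<lambda>x. indicator A x * h x)"
  by (rule integrableI_bounded_set[where A=A and B=C]) (use assms in \<open>auto simp: indicator_def\<close>)

lemma fold_int:
  fixes v :: "real \<Rightarrow> real"
  assumes vm: "v \<in> borel_measurable borel" and vb: "\<And>x. x \<in> J_S2 \<Longrightarrow> \<bar>v x\<bar> \<le> C"
  shows "(\<integral>b. indicator J_S2 b * v b \<partial>lborel) = (\<integral>b. indicator S_S2 b * (v b + v (sh b)) \<partial>lborel)"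
proof -
  let ?A1 = "{pi/2<..pi::real}" and ?A2 = "{-pi<..-pi/2::real}" and ?S0 = "{-pi/2<..0::real}" and ?S1 = "{0<..pi/2::real}"
  have iJ: "indicator J_S2 b * v b = indicator S_S2 b * v b + indicator ?A1 b * v b + indicator ?A2 b * v b" for b
    by (auto simp: indicator_def)
  have iS: "indicator S_S2 b * v (sh b) = indicator ?S0 b * v (b + pi) + indicator ?S1 b * v (b - pi)" for b
    by (auto simp: indicator_def sh_def)
  have vb': "\<bar>v x\<bar> \<le> C" if "x \<in> A" "A \<subseteq> J_S2" for x A using vb that by auto
  have iS0: "integrable lborel (\<lambda>b. indicator S_S2 b * v b)"
    using vm vb pi_gt_zero by (intro bint[where C=C]) auto
  have iA1: "integrable lborel (\<lambda>b. indicator ?A1 b * v b)"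
    using vm vb pi_gt_zero by (intro bint[where C=C]) auto
  have iA2: "integrable lborel (\<lambda>b. indicator ?A2 b * v b)"
    using vm vb pi_gt_zero by (intro bint[where C=C]) auto
  have sh1: "(\<integral>b. indicator ?A1 b * v b \<partial>lborel) = (\<integral>b. indicator ?S0 b * v (b + pi) \<partial>lborel)"
  proof -
    have "(\<integral>b. indicator ?A1 b * v b \<partial>lborel) = (\<integral>b. indicator ?A1 (b + pi) * v (b + pi) \<partial>lborel)"
      using vm by (intro lborel_shift) simp
    also have "\<dots> = (\<integral>b. indicator ?S0 b * v (b + pi) \<partial>lborel)"
      by (intro Bochner_Integration.integral_cong refl) (auto simp: indicator_def)
    finally show ?thesis .
  qed
  have sh2: "(\<integral>b. indicator ?A2 b * v b \<partial>lborel) = (\<integral>b. indicator ?S1 b * v (b - pi) \<partial>lborel)"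
  proof -
    have "(\<integral>b. indicator ?A2 b * v b \<partial>lborel) = (\<integral>b. indicator ?A2 (b + (- pi)) * v (b + (- pi)) \<partial>lborel)"
      using vm by (intro lborel_shift) simp
    also have "\<dots> = (\<integral>b. indicator ?S1 b * v (b - pi) \<partial>lborel)"
      by (intro Bochner_Integration.integral_cong refl) (auto simp: indicator_def)
    finally show ?thesis .
  qed
  have iB1: "integrable lborel (\<lambda>b. indicator ?S0 b * v (b + pi))"
  proof (rule bint[where C=C])
    show "(\<lambda>b. v (b + pi)) \<in> borel_measurable borel" using vm by measurable
    fix x assume "x \<in> ?S0" then show "\<bar>v (x + pi)\<bar> \<le> C" using vb by auto
  qed auto
  have iB2: "integrable lborel (\<lambda>b. indicator ?S1 b * v (b - pi))"
  proof (rule bint[where C=C])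
    show "(\<lambda>b. v (b - pi)) \<in> borel_measurable borel" using vm by measurable
    fix x assume "x \<in> ?S1" then show "\<bar>v (x - pi)\<bar> \<le> C" using vb by auto
  qed auto
  have "(\<integral>b. indicator J_S2 b * v b \<partial>lborel) = (\<integral>b. indicator S_S2 b * v b \<partial>lborel) + (\<integral>b. indicator ?A1 b * v b \<partial>lborel) + (\<integral>b. indicator ?A2 b * v b \<partial>lborel)"
    unfolding iJ using iS0 iA1 iA2 by simp
  also have "\<dots> = (\<integral>b. indicator S_S2 b * v b \<partial>lborel) + (\<integral>b. indicator ?S0 b * v (b + pi) \<partial>lborel) + (\<integral>b. indicator ?S1 b * v (b - pi) \<partial>lborel)"
    unfolding sh1 sh2 ..
  also have "\<dots> = (\<integral>b. indicator S_S2 b * v b + (indicator ?S0 b * v (b + pi) + indicator ?S1 b * v (b - pi)) \<partial>lborel)"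
    using iS0 iB1 iB2 by simp
  also have "\<dots> = (\<integral>b. indicator S_S2 b * (v b + v (sh b)) \<partial>lborel)"
    unfolding distrib_left iS ..
  finally show ?thesis .
qed


lemma Dm_S: "b \<in> S_S2 \<Longrightarrow> Dm b = \<bar>b\<bar>"
  unfolding Dm_def by auto

lemma Dm_sh: "b \<in> S_S2 \<Longrightarrow> Dm (sh b) = Dm b"
  unfolding Dm_def sh_def by auto

lemma sh_J: "b \<in> S_S2 \<Longrightarrow> sh b \<in> J_S2"
  unfolding sh_def using pi_gt_zero by auto

lemma S_J: "b \<in> S_S2 \<Longrightarrow> b \<in> J_S2"
  using pi_gt_zero by auto

lemma sh_dist: "t \<in> S_S2 \<Longrightarrow> per_mod (sh 0 - sh t) (2 * pi) \<le> \<bar>t\<bar>"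
proof -
  assume t: "t \<in> S_S2"
  show ?thesis
  proof (cases "t \<le> 0")
    case True then show ?thesis using per_mod_le_abs[of "2*pi" "- t"] by (simp add: sh_def)
  next
    case False
    then have "sh 0 - sh t = 2 * pi - t" by (simp add: sh_def)
    then show ?thesis using per_mod_le[of "2*pi" "2 * pi - t" 1] by simp
  qed
qed

lemma inner_mer: "b \<in> J_S2 \<Longrightarrow> (1 / 4) * (\<integral>a. indicator I_S2 a * cos a * (indicator W_S2 (a, b) * c) \<partial>lborel) = c / 2"
proof -
  assume b: "b \<in> J_S2"
  have "(\<integral>a. indicator I_S2 a * cos a * (indicator W_S2 (a, b) * c) \<partial>lborel) = (\<integral>a. c * (indicator I_S2 a * cos a) \<partial>lborel)"
    using b by (intro Bochner_Integration.integral_cong refl) (auto simp: W_S2_def indicator_def)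
  also have "\<dots> = c * 2" using int_I_cos by simp
  finally show ?thesis by simp
qed

lemma swap_meas: "(\<lambda>x::real\<times>real. (snd x, fst x)) \<in> borel_measurable borel"
  by (intro borel_measurable_continuous_onI continuous_intros)

lemma meridians_weak:
  fixes R :: real and M :: "real \<Rightarrow> (real \<times> real) measure"
  assumes R: "0 < R"
  assumes fam: "\<And>\<sigma>. 0 < \<sigma> \<Longrightarrow> \<exists>l Z. 0 \<le> l \<and> 0 < Z \<and>
      M \<sigma> = density nu_S2 (\<lambda>x. ennreal (exp (- l * (trunc_dist dS2 R meridians x)\<^sup>2) / Z)) \<and>
      maxent_feasible nu_S2 dS2 R meridians \<sigma> (M \<sigma>)"
  shows "weak_conv_metric dS2 W_S2 M post_meridians (at_right 0)"
  unfolding weak_conv_metric_def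
proof (intro allI impI, elim conjE exE)
  fix f :: "real \<times> real \<Rightarrow> real" and B
  assume fb: "\<forall>x\<in>W_S2. \<bar>f x\<bar> \<le> B" and fc: "metric_continuous dS2 W_S2 f"
  have B0: "0 \<le> B" using fb[rule_format, of "(0,0)"] unfolding W_S2_def by auto
  have fm: "f \<in> borel_measurable M_S2" by (rule metric_cont_meas[OF fc])
  define fW where "fW x = indicator W_S2 x * f x" for x
  have fWm: "fW \<in> borel_measurable borel" using fm unfolding meas_M_S2_iff fW_def[abs_def] .
  have fWb: "\<bar>fW x\<bar> \<le> B" for x using fb B0 unfolding fW_def by (cases "x \<in> W_S2") auto
  define G where "G b = (1 / 4) * (\<integral>a. indicator I_S2 a * cos a * (indicator W_S2 (a, b) * f (a, b)) \<partial>lborel)" for b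
  have Gw: "G b = (1 / 4) * (\<integral>a. indicator I_S2 a * cos a * fW (a, b) \<partial>lborel)" for b
    unfolding G_def fW_def ..
  define H where "H b = G b + G (sh b)" for b
  have sh0: "sh 0 = pi" by (simp add: sh_def)
  have target: "(\<integral>x. f x \<partial>post_meridians) = H 0"
  proof -
    have "(\<integral>x. f x \<partial>post_meridians) = (\<integral>x. fW x \<partial>post_meridians)"
      by (intro Bochner_Integration.integral_cong refl) (simp add: post_meridians_def fW_def)
    also have "\<dots> = G 0 + G pi" unfolding Gw by (rule post_mer_int[OF fWm fWb])
    finally show ?thesis unfolding H_def sh0 .
  qed
  have cosI: "\<bar>indicator I_S2 a * cos a * c\<bar> \<le> \<bar>c\<bar> * indicator I_S2 a" for a c :: real
    by (auto simp: indicator_def abs_mult intro: mult_left_le_one_le)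
  have wi: "integrable lborel (\<lambda>a. B * indicator I_S2 a)"
    by (intro integrable_mult_right integrable_real_indicator) auto
  have gi: "integrable lborel (\<lambda>a. indicator I_S2 a * cos a * fW (a, b))" for b
  proof (rule integrableI_bounded_set[where A=I_S2 and B=B])
    show "(\<lambda>a. indicator I_S2 a * cos a * fW (a, b)) \<in> borel_measurable lborel"
      using slice1_meas[OF fWm, of b] by simp
    show "AE x in lborel. x \<in> I_S2 \<longrightarrow> norm (indicator I_S2 x * cos x * fW (x, b)) \<le> B"
    proof (intro AE_I2 impI)
      fix x assume "x \<in> I_S2"
      have "\<bar>cos x\<bar> * \<bar>fW (x, b)\<bar> \<le> 1 * B" using fWb by (intro mult_mono) auto
      then show "norm (indicator I_S2 x * cos x * fW (x, b)) \<le> B" using \<open>x \<in> I_S2\<close> by (simp add: abs_mult)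
    qed
  qed auto
  have GB: "\<bar>G b\<bar> \<le> B / 2" for b
  proof -
    have "\<bar>\<integral>a. indicator I_S2 a * cos a * fW (a, b) \<partial>lborel\<bar> \<le> (\<integral>a. B * (indicator I_S2 a * cos a) \<partial>lborel)"
    proof (rule integral_abs_bound_integral[OF gi])
      show "integrable lborel (\<lambda>a. B * (indicator I_S2 a * cos a))"
        by (intro integrable_mult_right bint[where C=1]) auto
      fix a :: real
      show "\<bar>indicator I_S2 a * cos a * fW (a, b)\<bar> \<le> B * (indicator I_S2 a * cos a)"
      proof (cases "a \<in> I_S2")
        case True
        have c0: "0 \<le> cos a" using True by (auto intro!: cos_ge_zero)
        have "cos a * \<bar>fW (a, b)\<bar> \<le> cos a * B" using fWb c0 by (intro mult_left_mono) auto
        then show ?thesis using True c0 by (simp add: abs_mult mult.commute)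
      qed simp
    qed
    also have "\<dots> = B * 2" using int_I_cos by simp
    finally show ?thesis unfolding Gw by (simp add: abs_mult)
  qed
  have HB: "\<bar>H b\<bar> \<le> B" for b unfolding H_def using GB[of b] GB[of "sh b"] by linarith
  have Gm: "G \<in> borel_measurable borel"
  proof -
    have "(\<lambda>x. indicator I_S2 (snd x) * cos (snd x) * fW (snd x, fst x)) \<in> borel_measurable (lborel \<Otimes>\<^sub>M lborel :: (real \<times> real) measure)"
      unfolding lborel_prod using measurable_compose[OF swap_meas fWm] by simp
    then have "case_prod (\<lambda>b a. indicator I_S2 a * cos a * fW (a, b)) \<in> borel_measurable (lborel \<Otimes>\<^sub>M lborel)"
      by (simp add: case_prod_beta')
    from lborel.borel_measurable_lebesgue_integral[OF this]
    have "(\<lambda>b. \<integral>a. indicator I_S2 a * cos a * fW (a, b) \<partial>lborel) \<in> borel_measurable lborel" .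
    then show ?thesis unfolding Gw[abs_def] by simp
  qed
  have Hm: "H \<in> borel_measurable borel" unfolding H_def[abs_def] using Gm by measurable
  have Gcont: "\<exists>d>0. \<forall>t\<in>S_S2. \<bar>t\<bar> < d \<longrightarrow> \<bar>G (\<phi> t) - G (\<phi> 0)\<bar> \<le> e"
    if e: "0 < e" and \<phi>J: "\<And>t. t \<in> S_S2 \<Longrightarrow> \<phi> t \<in> J_S2"
      and \<phi>d: "\<And>t. t \<in> S_S2 \<Longrightarrow> per_mod (\<phi> 0 - \<phi> t) (2 * pi) \<le> \<bar>t\<bar>" for e \<phi>
  proof -
    have "\<exists>d>0. \<forall>t\<in>S_S2. \<bar>t - 0\<bar> < d \<longrightarrow>
        \<bar>(\<integral>a. indicator I_S2 a * cos a * fW (a, \<phi> t) \<partial>lborel) - (\<integral>a. indicator I_S2 a * cos a * fW (a, \<phi> 0) \<partial>lborel)\<bar> < e"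
    proof (rule dct_cont[where w="\<lambda>a. B * indicator I_S2 a"])
      show "(\<lambda>a. indicator I_S2 a * cos a * fW (a, \<phi> t)) \<in> borel_measurable lborel" for t
        using slice1_meas[OF fWm, of "\<phi> t"] by simp
      show "integrable lborel (\<lambda>a. B * indicator I_S2 a)" by (rule wi)
      show "\<bar>indicator I_S2 y * cos y * fW (y, \<phi> t)\<bar> \<le> B * indicator I_S2 y" for t y
        using cosI[of y "fW (y, \<phi> t)"] fWb[of "(y, \<phi> t)"] B0
        by (cases "y \<in> I_S2") (auto simp: indicator_def)
      show "(0::real) \<in> S_S2" by simp
      show "0 < e" by fact
      fix y :: real and e' :: real assume e': "0 < e'"
      show "\<exists>d>0. \<forall>t\<in>S_S2. \<bar>t - 0\<bar> < d \<longrightarrow> \<bar>indicator I_S2 y * cos y * fW (y, \<phi> t) - indicator I_S2 y * cos y * fW (y, \<phi> 0)\<bar> < e'"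
      proof (cases "y \<in> I_S2")
        case False then show ?thesis using e' by (intro exI[of _ 1]) auto
      next
        case True
        have yW: "(y, \<phi> 0) \<in> W_S2" using True \<phi>J[of 0] unfolding W_S2_def by auto
        obtain d where d: "0 < d" "\<And>z. z \<in> W_S2 \<Longrightarrow> dS2 (y, \<phi> 0) z < d \<Longrightarrow> \<bar>f z - f (y, \<phi> 0)\<bar> < e'"
          using fc yW e' unfolding metric_continuous_def by blast
        show ?thesis
        proof (intro exI[of _ d] conjI ballI impI d(1))
          fix t assume t: "t \<in> S_S2" "\<bar>t - 0\<bar> < d"
          have tW: "(y, \<phi> t) \<in> W_S2" using True \<phi>J[OF t(1)] unfolding W_S2_def by auto
          have "dS2 (y, \<phi> 0) (y, \<phi> t) \<le> \<bar>t\<bar>"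
            unfolding dS2_same_fst using \<phi>d[OF t(1)] .
          then have fd: "\<bar>f (y, \<phi> t) - f (y, \<phi> 0)\<bar> < e'" using d(2)[OF tW] t by simp
          have "\<bar>cos y\<bar> * \<bar>f (y, \<phi> t) - f (y, \<phi> 0)\<bar> \<le> 1 * \<bar>f (y, \<phi> t) - f (y, \<phi> 0)\<bar>"
            by (intro mult_right_mono) auto
          then have "\<bar>cos y * f (y, \<phi> t) - cos y * f (y, \<phi> 0)\<bar> < e'"
            using fd by (simp add: abs_mult right_diff_distrib[symmetric])
          then show "\<bar>indicator I_S2 y * cos y * fW (y, \<phi> t) - indicator I_S2 y * cos y * fW (y, \<phi> 0)\<bar> < e'"
            using True tW yW unfolding fW_def by simp
        qed
      qed
    qed
    then obtain d where d: "0 < d" "\<And>t. t \<in> S_S2 \<Longrightarrow> \<bar>t\<bar> < d \<Longrightarrow>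
        \<bar>(\<integral>a. indicator I_S2 a * cos a * fW (a, \<phi> t) \<partial>lborel) - (\<integral>a. indicator I_S2 a * cos a * fW (a, \<phi> 0) \<partial>lborel)\<bar> < e"
      by auto
    show ?thesis
    proof (intro exI[of _ d] conjI ballI impI d(1))
      fix t assume t: "t \<in> S_S2" "\<bar>t\<bar> < d"
      have "G (\<phi> t) - G (\<phi> 0) = (1 / 4) * ((\<integral>a. indicator I_S2 a * cos a * fW (a, \<phi> t) \<partial>lborel) - (\<integral>a. indicator I_S2 a * cos a * fW (a, \<phi> 0) \<partial>lborel))"
        unfolding Gw by (simp only: right_diff_distrib)
      then have "\<bar>G (\<phi> t) - G (\<phi> 0)\<bar> = (1 / 4) * \<bar>(\<integral>a. indicator I_S2 a * cos a * fW (a, \<phi> t) \<partial>lborel) - (\<integral>a. indicator I_S2 a * cos a * fW (a, \<phi> 0) \<partial>lborel)\<bar>"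
        by (simp only: abs_mult)
      also have "\<dots> \<le> 1 * e" using d(2)[OF t] by (intro mult_mono) auto
      finally show "\<bar>G (\<phi> t) - G (\<phi> 0)\<bar> \<le> e" by simp
    qed
  qed
  have Hcont: "\<exists>d>0. \<forall>t\<in>S_S2. \<bar>t\<bar> < d \<longrightarrow> \<bar>H t - H 0\<bar> \<le> e" if e: "0 < e" for e
  proof -
    have e2: "0 < e / 2" using e by simp
    have "\<exists>d>0. \<forall>t\<in>S_S2. \<bar>t\<bar> < d \<longrightarrow> \<bar>G ((\<lambda>x. x) t) - G ((\<lambda>x. x) 0)\<bar> \<le> e / 2"
    proof (rule Gcont[OF e2])
      show "\<And>t. t \<in> S_S2 \<Longrightarrow> (\<lambda>x. x) t \<in> J_S2" using S_J by simp
      show "\<And>t. t \<in> S_S2 \<Longrightarrow> per_mod ((\<lambda>x. x) 0 - (\<lambda>x. x) t) (2 * pi) \<le> \<bar>t\<bar>"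
        using per_mod_le_abs[of "2*pi"] by (metis abs_minus_cancel diff_0 pi_gt_zero zero_less_mult_iff zero_less_numeral)
    qed
    then obtain d1 where d1: "0 < d1" "\<And>t. t \<in> S_S2 \<Longrightarrow> \<bar>t\<bar> < d1 \<Longrightarrow> \<bar>G t - G 0\<bar> \<le> e / 2"
      by auto
    have "\<exists>d>0. \<forall>t\<in>S_S2. \<bar>t\<bar> < d \<longrightarrow> \<bar>G (sh t) - G (sh 0)\<bar> \<le> e / 2"
      by (rule Gcont[OF e2 sh_J sh_dist])
    then obtain d2 where d2: "0 < d2" "\<And>t. t \<in> S_S2 \<Longrightarrow> \<bar>t\<bar> < d2 \<Longrightarrow> \<bar>G (sh t) - G (sh 0)\<bar> \<le> e / 2"
      by auto
    show ?thesis
    proof (intro exI[of _ "min d1 d2"] conjI ballI impI)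
      show "0 < min d1 d2" using d1 d2 by simp
      fix t assume t: "t \<in> S_S2" "\<bar>t\<bar> < min d1 d2"
      have "\<bar>G t - G 0\<bar> \<le> e / 2" using d1(2)[OF t(1)] t(2) by simp
      moreover have "\<bar>G (sh t) - G (sh 0)\<bar> \<le> e / 2" using d2(2)[OF t(1)] t(2) by simp
      ultimately show "\<bar>H t - H 0\<bar> \<le> e" unfolding H_def by linarith
    qed
  qed
  show "((\<lambda>s. \<integral>x. f x \<partial>M s) \<longlongrightarrow> (\<integral>x. f x \<partial>post_meridians)) (at_right 0)"
    unfolding target
  proof (rule tendsto_at_right0_bound)
    fix \<epsilon> :: real assume \<epsilon>: "0 < \<epsilon>"
    obtain \<delta> where \<delta>: "0 < \<delta>" "\<And>t. t \<in> S_S2 \<Longrightarrow> \<bar>t\<bar> < \<delta> \<Longrightarrow> \<bar>H t - H 0\<bar> \<le> \<epsilon>"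
      using Hcont[OF \<epsilon>] by blast
    show "\<exists>C. \<forall>\<sigma>>0. \<bar>(\<integral>x. f x \<partial>M \<sigma>) - H 0\<bar> \<le> \<epsilon> + C * \<sigma>\<^sup>2"
    proof (intro exI[of _ "2 * B / (min \<delta> R)\<^sup>2"] allI impI)
      fix \<sigma> :: real assume \<sigma>: "0 < \<sigma>"
      obtain l Z where l: "0 \<le> l" and Z: "0 < Z"
        and Mdef: "M \<sigma> = density nu_S2 (\<lambda>x. ennreal (exp (- l * (trunc_dist dS2 R meridians x)\<^sup>2) / Z))"
        and feas: "maxent_feasible nu_S2 dS2 R meridians \<sigma> (M \<sigma>)"
        using fam[OF \<sigma>] by blast
      define k where "k b = exp (- l * (min (Dm b) R)\<^sup>2) / Z" for b
      define q where "q b = k b / pi" for b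
      let ?p = "\<lambda>x. exp (- l * (trunc_dist dS2 R meridians x)\<^sup>2) / Z"
      have pm: "?p \<in> borel_measurable M_S2" using trunc_mer_meas by measurable
      have pk: "?p x = k (snd x)" if "x \<in> W_S2" for x unfolding k_def using trunc_mer_W[OF that] by simp
      have k0: "0 \<le> k a" for a unfolding k_def using Z by simp
      have kb: "k a \<le> 1 / Z" for a unfolding k_def using Z l by (simp add: divide_right_mono)
      note rep = rep_mer[OF _ _ pm pk k0 kb, folded Mdef]
      have km: "k \<in> borel_measurable borel" unfolding k_def[abs_def] by measurable
      have qm: "q \<in> borel_measurable borel" unfolding q_def[abs_def] using km by measurable
      have q0: "0 \<le> q a" for a unfolding q_def using k0[of a] by simp
      have qb: "q a \<le> 1 / (Z * pi)" for a
      proof -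
        have "k a / pi \<le> (1 / Z) / pi" using kb[of a] pi_gt_zero by (intro divide_right_mono) auto
        then show ?thesis unfolding q_def by simp
      qed
      have qsh: "q (sh b) = q b" if "b \<in> S_S2" for b unfolding q_def k_def using Dm_sh[OF that] by simp
      have qi: "integrable lborel (\<lambda>t. indicator S_S2 t * q t)"
        using qm q0 qb by (intro bint[where C="1 / (Z * pi)"]) auto
      have q1: "(\<integral>t. indicator S_S2 t * q t \<partial>lborel) = 1"
      proof -
        have "(\<integral>x. 1 \<partial>M \<sigma>) = (\<integral>b. indicator J_S2 b * (k b / pi * ((1 / 4) * (\<integral>a. indicator I_S2 a * cos a * (indicator W_S2 (a, b) * 1) \<partial>lborel))) \<partial>lborel)"
          by (rule rep) auto
        also have "\<dots> = (\<integral>b. indicator J_S2 b * (q b / 2) \<partial>lborel)"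
        proof (intro Bochner_Integration.integral_cong refl)
          fix b show "indicator J_S2 b * (k b / pi * ((1 / 4) * (\<integral>a. indicator I_S2 a * cos a * (indicator W_S2 (a, b) * 1) \<partial>lborel))) = indicator J_S2 b * (q b / 2)"
            using inner_mer[of b 1] unfolding q_def by (cases "b \<in> J_S2") auto
        qed
        also have "\<dots> = (\<integral>b. indicator S_S2 b * (q b / 2 + q (sh b) / 2) \<partial>lborel)"
        proof (rule fold_int[where C="1 / (Z * pi)"])
          show "(\<lambda>b. q b / 2) \<in> borel_measurable borel" using qm by measurable
          fix x :: real
          show "\<bar>q x / 2\<bar> \<le> 1 / (Z * pi)" using q0[of x] qb[of x] by simp
        qed
        also have "\<dots> = (\<integral>t. indicator S_S2 t * q t \<partial>lborel)"
          by (intro Bochner_Integration.integral_cong refl) (auto simp: indicator_def qsh)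
        finally show ?thesis using feas_prob[OF feas] by simp
      qed
      let ?g = "\<lambda>x. (trunc_dist dS2 R meridians x)\<^sup>2"
      have gb: "0 \<le> ?g x \<and> ?g x \<le> R\<^sup>2" if "x \<in> W_S2" for x
        unfolding trunc_mer_W[OF that] using R that by (auto intro!: power_mono simp: Dm_def W_S2_iff)
      have qg: "(\<integral>t. indicator S_S2 t * q t * (min \<bar>t\<bar> R)\<^sup>2 \<partial>lborel) \<le> \<sigma>\<^sup>2"
      proof -
        have "(\<integral>x. ?g x \<partial>M \<sigma>) = (\<integral>b. indicator J_S2 b * (k b / pi * ((1 / 4) * (\<integral>a. indicator I_S2 a * cos a * (indicator W_S2 (a, b) * ?g (a, b)) \<partial>lborel))) \<partial>lborel)"
          by (rule rep[where Bu="R\<^sup>2"]) (use trunc_mer_meas gb in auto)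
        also have "\<dots> = (\<integral>b. indicator J_S2 b * (q b * ((min (Dm b) R)\<^sup>2 / 2)) \<partial>lborel)"
        proof (intro Bochner_Integration.integral_cong refl)
          fix b show "indicator J_S2 b * (k b / pi * ((1 / 4) * (\<integral>a. indicator I_S2 a * cos a * (indicator W_S2 (a, b) * ?g (a, b)) \<partial>lborel)))
              = indicator J_S2 b * (q b * ((min (Dm b) R)\<^sup>2 / 2))"
          proof (cases "b \<in> J_S2")
            case True
            have "(\<integral>a. indicator I_S2 a * cos a * (indicator W_S2 (a, b) * ?g (a, b)) \<partial>lborel)
                = (\<integral>a. indicator I_S2 a * cos a * (indicator W_S2 (a, b) * (min (Dm b) R)\<^sup>2) \<partial>lborel)"
              by (intro Bochner_Integration.integral_cong refl) (auto simp: indicator_def trunc_mer_W)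
            then show ?thesis using inner_mer[OF True, of "(min (Dm b) R)\<^sup>2"] unfolding q_def by simp
          qed simp
        qed
        also have "\<dots> = (\<integral>b. indicator S_S2 b * (q b * ((min (Dm b) R)\<^sup>2 / 2) + q (sh b) * ((min (Dm (sh b)) R)\<^sup>2 / 2)) \<partial>lborel)"
        proof (rule fold_int[where C="1 / (Z * pi) * R\<^sup>2"])
          show "(\<lambda>b. q b * ((min (Dm b) R)\<^sup>2 / 2)) \<in> borel_measurable borel" using qm by measurable
          fix x :: real assume xJ: "x \<in> J_S2"
          have "(min (Dm x) R)\<^sup>2 \<le> R\<^sup>2" using R xJ by (intro power_mono) (auto simp: Dm_def)
          then have "(min (Dm x) R)\<^sup>2 / 2 \<le> R\<^sup>2" by (simp add: power2_eq_square) (smt (verit) zero_le_square)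
          then have "q x * ((min (Dm x) R)\<^sup>2 / 2) \<le> 1 / (Z * pi) * R\<^sup>2"
            using qb[of x] q0[of x] Z pi_gt_zero by (intro mult_mono) auto
          then show "\<bar>q x * ((min (Dm x) R)\<^sup>2 / 2)\<bar> \<le> 1 / (Z * pi) * R\<^sup>2" using q0[of x] by simp
        qed
        also have "\<dots> = (\<integral>t. indicator S_S2 t * q t * (min \<bar>t\<bar> R)\<^sup>2 \<partial>lborel)"
          by (intro Bochner_Integration.integral_cong refl) (auto simp: indicator_def qsh Dm_sh Dm_S)
        finally show ?thesis using feas_int_le[OF feas refl trunc_mer_meas gb] by simp
      qed
      have repf: "(\<integral>x. f x \<partial>M \<sigma>) = (\<integral>t. indicator S_S2 t * q t * H t \<partial>lborel)"
      proof -
        have "(\<integral>x. f x \<partial>M \<sigma>) = (\<integral>b. indicator J_S2 b * (q b * G b) \<partial>lborel)"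
          unfolding q_def G_def using fm fb by (subst rep[where Bu=B]) auto
        also have "\<dots> = (\<integral>b. indicator S_S2 b * (q b * G b + q (sh b) * G (sh b)) \<partial>lborel)"
        proof (rule fold_int[where C="1 / (Z * pi) * B"])
          show "(\<lambda>b. q b * G b) \<in> borel_measurable borel" using qm Gm by measurable
          fix x :: real
          have "q x * \<bar>G x\<bar> \<le> 1 / (Z * pi) * B"
            using qb[of x] q0[of x] GB[of x] B0 Z pi_gt_zero by (intro mult_mono) auto
          then show "\<bar>q x * G x\<bar> \<le> 1 / (Z * pi) * B" using q0[of x] by (simp add: abs_mult)
        qed
        also have "\<dots> = (\<integral>t. indicator S_S2 t * q t * H t \<partial>lborel)"
          by (intro Bochner_Integration.integral_cong refl) (auto simp: indicator_def qsh H_def algebra_simps)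
        finally show ?thesis .
      qed
      have "\<bar>(\<integral>t. indicator S_S2 t * q t * H t \<partial>lborel) - H 0\<bar> \<le> \<epsilon> + 2 * B * \<sigma>\<^sup>2 / (min \<delta> R)\<^sup>2"
        by (rule conc1[OF _ qm Hm _ qi q1 qg HB HB \<delta>(2) \<delta>(1) R]) (use \<epsilon> q0 in auto)
      then show "\<bar>(\<integral>x. f x \<partial>M \<sigma>) - H 0\<bar> \<le> \<epsilon> + 2 * B / (min \<delta> R)\<^sup>2 * \<sigma>\<^sup>2"
        unfolding repf by (simp add: field_simps)
    qed
  qed
qed


lemma posterior_generic:
  fixes R :: real and A :: "(real \<times> real) set" and P :: "(real \<times> real) measure"
  assumes R: "0 < R"
    and gm: "(\<lambda>x. (trunc_dist dS2 R A x)\<^sup>2) \<in> borel_measurable M_S2"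
    and gb: "\<And>x. x \<in> W_S2 \<Longrightarrow> 0 \<le> (trunc_dist dS2 R A x)\<^sup>2 \<and> (trunc_dist dS2 R A x)\<^sup>2 \<le> R\<^sup>2"
    and small: "\<And>a x. 0 < a \<Longrightarrow> x \<in> W_S2 \<Longrightarrow> \<bar>fst x\<bar> < a \<Longrightarrow> \<bar>snd x\<bar> < a \<Longrightarrow> (trunc_dist dS2 R A x)\<^sup>2 \<le> a\<^sup>2"
    and weak: "\<And>M. (\<And>\<sigma>. 0 < \<sigma> \<Longrightarrow> \<exists>l Z. 0 \<le> l \<and> 0 < Z \<and>
      M \<sigma> = density nu_S2 (\<lambda>x. ennreal (exp (- l * (trunc_dist dS2 R A x)\<^sup>2) / Z)) \<and>
      maxent_feasible nu_S2 dS2 R A \<sigma> (M \<sigma>)) \<Longrightarrow> weak_conv_metric dS2 W_S2 M P (at_right 0)"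
  shows "maxent_posterior nu_S2 dS2 R A P"
proof -
  let ?g = "\<lambda>x. (trunc_dist dS2 R A x)\<^sup>2"
  have gm': "?g \<in> borel_measurable nu_S2" using gm by simp
  have gb': "\<And>x. x \<in> space nu_S2 \<Longrightarrow> 0 \<le> ?g x \<and> ?g x \<le> R\<^sup>2" using gb by simp
  have K: "0 < R\<^sup>2" using R by simp
  have pos: "\<And>e. 0 < e \<Longrightarrow> 0 < measure nu_S2 {x \<in> space nu_S2. ?g x < e}"
    by (rule pos_from_box[OF gm small])
  note S = maxent_structure[where \<rho>=dS2 and R=R and A=A and K="R\<^sup>2" and g="?g" and \<nu>=nu_S2, OF refl prob_nu_S2 gm' gb' K pos]
  show ?thesis unfolding maxent_posterior_def
  proof (intro conjI allI impI)
    fix \<sigma> :: real assume "0 < \<sigma>" then show "\<exists>!\<mu>. maxent_minimizer nu_S2 dS2 R A \<sigma> \<mu>" using maxent_structure(1)[OF refl prob_nu_S2 gm' gb' K pos] by blast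
  next
    show "weak_conv_metric dS2 (space nu_S2) (\<lambda>\<sigma>. THE \<mu>. maxent_minimizer nu_S2 dS2 R A \<sigma> \<mu>) P (at_right 0)"
      unfolding space_nu_S2 by (rule weak) (use maxent_structure(2)[OF refl prob_nu_S2 gm' gb' K pos] in blast)
  qed
qed

theorem proposition4p2:
  fixes R :: real
  assumes "R > 0"
  shows "maxent_posterior nu_S2 dS2 R equator post_equator \<and>
         maxent_posterior nu_S2 dS2 R meridians post_meridians"
proof
  show "maxent_posterior nu_S2 dS2 R equator post_equator"
  proof (rule posterior_generic[OF assms trunc_eq_meas])
    fix x :: "real \<times> real" assume x: "x \<in> W_S2"
    show "0 \<le> (trunc_dist dS2 R equator x)\<^sup>2 \<and> (trunc_dist dS2 R equator x)\<^sup>2 \<le> R\<^sup>2"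
      unfolding trunc_eq_W[OF x] using assms by (auto intro!: power_mono)
  next
    fix a :: real and x :: "real \<times> real" assume a: "0 < a" and x: "x \<in> W_S2" "\<bar>fst x\<bar> < a" "\<bar>snd x\<bar> < a"
    have "(min \<bar>fst x\<bar> R)\<^sup>2 \<le> a\<^sup>2" using x assms by (intro power_mono) auto
    then show "(trunc_dist dS2 R equator x)\<^sup>2 \<le> a\<^sup>2" unfolding trunc_eq_W[OF x(1)] .
  next
    fix M assume "\<And>\<sigma>. 0 < \<sigma> \<Longrightarrow> \<exists>l Z. 0 \<le> l \<and> 0 < Z \<and>
      M \<sigma> = density nu_S2 (\<lambda>x. ennreal (exp (- l * (trunc_dist dS2 R equator x)\<^sup>2) / Z)) \<and>
      maxent_feasible nu_S2 dS2 R equator \<sigma> (M \<sigma>)"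
    then show "weak_conv_metric dS2 W_S2 M post_equator (at_right 0)" by (rule equator_weak[OF assms])
  qed
  show "maxent_posterior nu_S2 dS2 R meridians post_meridians"
  proof (rule posterior_generic[OF assms trunc_mer_meas])
    fix x :: "real \<times> real" assume x: "x \<in> W_S2"
    show "0 \<le> (trunc_dist dS2 R meridians x)\<^sup>2 \<and> (trunc_dist dS2 R meridians x)\<^sup>2 \<le> R\<^sup>2"
      unfolding trunc_mer_W[OF x] using assms x by (auto intro!: power_mono simp: Dm_def W_S2_iff)
  next
    fix a :: real and x :: "real \<times> real" assume a: "0 < a" and x: "x \<in> W_S2" "\<bar>fst x\<bar> < a" "\<bar>snd x\<bar> < a"
    have "0 \<le> Dm (snd x)" using x(1) by (auto simp: Dm_def W_S2_iff)
    moreover have "Dm (snd x) \<le> \<bar>snd x\<bar>" by (simp add: Dm_def)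
    ultimately have "(min (Dm (snd x)) R)\<^sup>2 \<le> a\<^sup>2" using x assms by (intro power_mono) auto
    then show "(trunc_dist dS2 R meridians x)\<^sup>2 \<le> a\<^sup>2" unfolding trunc_mer_W[OF x(1)] .
  next
    fix M assume "\<And>\<sigma>. 0 < \<sigma> \<Longrightarrow> \<exists>l Z. 0 \<le> l \<and> 0 < Z \<and>
      M \<sigma> = density nu_S2 (\<lambda>x. ennreal (exp (- l * (trunc_dist dS2 R meridians x)\<^sup>2) / Z)) \<and>
      maxent_feasible nu_S2 dS2 R meridians \<sigma> (M \<sigma>)"
    then show "weak_conv_metric dS2 W_S2 M post_meridians (at_right 0)" by (rule meridians_weak[OF assms])
  qed
qed


end
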